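(* Let $T$ be a c.n.u. contraction on $H$ and $\mathcal{N}:=\operatorname{span}\bigcup_{\lambda\in\mathbb{D}_+\cup\mathbb{D}_-}N_\lambda$. Then $\mathcal{N}$ is dense in $A_T^{\perp_s}$.
   Context: $H$ is an infinite-dimensional separable complex Hilbert space; $T\in\mathbb{B}(H)$, $\|T\|\le1$, is completely non-unitary (no nonzero invariant subspace on which $T$ is unitary). $\mathbb{K}=\ker(I-T^*T)$. $\mathbb{H}=H\oplus_\perp H$ with $[(x_1,x_2),(y_1,y_2)]=i(x_1,y_1)_H-i(x_2,y_2)_H$; $S^{\perp_s}=\{a:[a,b]=0\ \forall b\in S\}$; $A_T=\{(x,Tx):x\in\mathbb{K}\}$. $\mathbb{D}_\pm$ are two copies of the open unit disc. $N_\lambda=\{(x,\lambda x):x\in H\}\cap A_T^{\perp_s}$ for $\lambda\in\mathbb{D}_+$, and $N_\lambda=\{(\lambda x,x):x\in H\}\cap A_T^{\perp_s}$ for $\lambda\in\mathbb{D}_-$. *)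

theory Defs
  imports Complex_Main
begin

text \<open>Concrete model of the infinite-dimensional separable complex Hilbert space H:
  the sequence space l2(N) over the complex numbers (every such H is unitarily
  isomorphic to it). Inner product linear in the first argument.\<close>

definition l2 :: "(nat \<Rightarrow> complex) set" where
  "l2 = {x. summable (\<lambda>n. (cmod (x n))^2)}"

definition l2inner :: "(nat \<Rightarrow> complex) \<Rightarrow> (nat \<Rightarrow> complex) \<Rightarrow> complex" where
  "l2inner x y = (\<Sum>n. x n * cnj (y n))"

definition l2norm :: "(nat \<Rightarrow> complex) \<Rightarrow> real" where
  "l2norm x = sqrt (\<Sum>n. (cmod (x n))^2)"

definition sc :: "complex \<Rightarrow> (nat \<Rightarrow> complex) \<Rightarrow> (nat \<Rightarrow> complex)" where
  "sc a x = (\<lambda>n. a * x n)"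

definition is_contraction :: "((nat \<Rightarrow> complex) \<Rightarrow> (nat \<Rightarrow> complex)) \<Rightarrow> bool" where
  "is_contraction T \<longleftrightarrow>
     (\<forall>x\<in>l2. T x \<in> l2) \<and>
     (\<forall>x\<in>l2. \<forall>y\<in>l2. \<forall>a b. T (\<lambda>n. a * x n + b * y n) = (\<lambda>n. a * T x n + b * T y n)) \<and>
     (\<forall>x\<in>l2. l2norm (T x) \<le> l2norm x)"

definition adjoint :: "((nat \<Rightarrow> complex) \<Rightarrow> (nat \<Rightarrow> complex)) \<Rightarrow> (nat \<Rightarrow> complex) \<Rightarrow> (nat \<Rightarrow> complex)" where
  "adjoint T y = (THE z. z \<in> l2 \<and> (\<forall>x\<in>l2. l2inner (T x) y = l2inner x z))"

definition closed_subspace :: "(nat \<Rightarrow> complex) set \<Rightarrow> bool" where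
  "closed_subspace M \<longleftrightarrow> M \<subseteq> l2 \<and> (\<lambda>n. 0) \<in> M \<and>
     (\<forall>x\<in>M. \<forall>y\<in>M. \<forall>a b. (\<lambda>n. a * x n + b * y n) \<in> M) \<and>
     (\<forall>u x. (\<forall>k. u k \<in> M) \<and> x \<in> l2 \<and> (\<lambda>k. l2norm (\<lambda>n. u k n - x n)) \<longlonglongrightarrow> 0 \<longrightarrow> x \<in> M)"

definition cnu :: "((nat \<Rightarrow> complex) \<Rightarrow> (nat \<Rightarrow> complex)) \<Rightarrow> bool" where
  "cnu T \<longleftrightarrow> \<not> (\<exists>M. closed_subspace M \<and> M \<noteq> {\<lambda>n. 0} \<and> T ` M = M \<and>
                      (\<forall>x\<in>M. l2norm (T x) = l2norm x))"

definition KK :: "((nat \<Rightarrow> complex) \<Rightarrow> (nat \<Rightarrow> complex)) \<Rightarrow> (nat \<Rightarrow> complex) set" where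
  "KK T = {x \<in> l2. adjoint T (T x) = x}"

type_synonym kvec = "(nat \<Rightarrow> complex) \<times> (nat \<Rightarrow> complex)"

definition kspace :: "kvec set" where
  "kspace = l2 \<times> l2"

definition kform :: "kvec \<Rightarrow> kvec \<Rightarrow> complex" where
  "kform a b = \<i> * l2inner (fst a) (fst b) - \<i> * l2inner (snd a) (snd b)"

definition sorth :: "kvec set \<Rightarrow> kvec set" where
  "sorth S = {a \<in> kspace. \<forall>b\<in>S. kform a b = 0}"

definition knorm :: "kvec \<Rightarrow> real" where
  "knorm a = sqrt ((l2norm (fst a))^2 + (l2norm (snd a))^2)"

definition kdiff :: "kvec \<Rightarrow> kvec \<Rightarrow> kvec" where
  "kdiff a b = ((\<lambda>n. fst a n - fst b n), (\<lambda>n. snd a n - snd b n))"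

definition kspan :: "kvec set \<Rightarrow> kvec set" where
  "kspan S = {v. \<exists>F c. finite F \<and> F \<subseteq> S \<and>
       v = ((\<lambda>n. \<Sum>a\<in>F. c a * fst a n), (\<lambda>n. \<Sum>a\<in>F. c a * snd a n))}"

definition AT :: "((nat \<Rightarrow> complex) \<Rightarrow> (nat \<Rightarrow> complex)) \<Rightarrow> kvec set" where
  "AT T = {(x, T x) | x. x \<in> KK T}"

definition Nplus :: "((nat \<Rightarrow> complex) \<Rightarrow> (nat \<Rightarrow> complex)) \<Rightarrow> complex \<Rightarrow> kvec set" where
  "Nplus T l = {(x, sc l x) | x. x \<in> l2} \<inter> sorth (AT T)"

definition Nminus :: "((nat \<Rightarrow> complex) \<Rightarrow> (nat \<Rightarrow> complex)) \<Rightarrow> complex \<Rightarrow> kvec set" where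
  "Nminus T l = {(sc l x, x) | x. x \<in> l2} \<inter> sorth (AT T)"

definition NN :: "((nat \<Rightarrow> complex) \<Rightarrow> (nat \<Rightarrow> complex)) \<Rightarrow> kvec set" where
  "NN T = kspan (\<Union>l\<in>{l. cmod l < 1}. Nplus T l \<union> Nminus T l)"

end

theory Submission
  imports Defs "HOL-Library.Function_Algebras" "HOL-Analysis.Analysis"
begin

lemma sc_apply[simp]: "sc a x n = a * x n" by (simp add: sc_def)

lemma l2_zero[simp]: "(0::nat\<Rightarrow>complex) \<in> l2"
  by (simp add: l2_def)

lemma l2_zero'[simp]: "(\<lambda>n. 0::complex) \<in> l2"
  by (simp add: l2_def)

lemma l2_summable: "x \<in> l2 \<Longrightarrow> summable (\<lambda>n. (cmod (x n))^2)"
  by (simp add: l2_def)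

lemma l2_sc[simp]: "x \<in> l2 \<Longrightarrow> sc a x \<in> l2"
  unfolding l2_def by (simp add: norm_mult power_mult_distrib summable_mult)

lemma sq_bound: "(cmod (a + b))^2 \<le> 2 * (cmod a)^2 + 2 * (cmod b)^2"
proof -
  have "(cmod (a + b))^2 \<le> (cmod a + cmod b)^2"
    by (simp add: norm_triangle_ineq power_mono)
  also have "\<dots> \<le> 2 * (cmod a)^2 + 2 * (cmod b)^2"
    using power2_diff[of "cmod a" "cmod b"] power2_sum[of "cmod a" "cmod b"] zero_le_power2[of "cmod a - cmod b"] by linarith
  finally show ?thesis .
qed

lemma l2_add[simp]: "x \<in> l2 \<Longrightarrow> y \<in> l2 \<Longrightarrow> x + y \<in> l2"
  unfolding l2_def
proof (simp, rule summable_comparison_test')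
  assume "summable (\<lambda>n. (cmod (x n))\<^sup>2)" "summable (\<lambda>n. (cmod (y n))\<^sup>2)"
  then show "summable (\<lambda>n. 2 * (cmod (x n))^2 + 2 * (cmod (y n))^2)"
    by (intro summable_add summable_mult)
  show "\<And>n. 0 \<le> n \<Longrightarrow> norm ((cmod (x n + y n))\<^sup>2) \<le> 2 * (cmod (x n))^2 + 2 * (cmod (y n))^2"
    using sq_bound by simp
qed

lemma uminus_sc: "- x = sc (-1) x" by (auto simp: sc_def)
lemma l2_uminus[simp]: "x \<in> l2 \<Longrightarrow> - x \<in> l2"
  by (simp add: uminus_sc)
lemma l2_diff[simp]: "x \<in> l2 \<Longrightarrow> y \<in> l2 \<Longrightarrow> x - y \<in> l2"
  by (metis l2_add l2_uminus diff_conv_add_uminus)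

lemma lc_eq: "(\<lambda>n. a * x n + b * y n) = sc a x + sc b y"
  by (auto simp: sc_def)

lemma l2_lc[simp]: "x \<in> l2 \<Longrightarrow> y \<in> l2 \<Longrightarrow> (\<lambda>n. a * x n + b * y n) \<in> l2"
  by (simp add: lc_eq)

lemma l2_sum: "finite F \<Longrightarrow> (\<forall>a\<in>F. f a \<in> l2) \<Longrightarrow> (\<lambda>n. \<Sum>a\<in>F. c a * f a n) \<in> l2"
proof (induction F rule: finite_induct)
  case empty then show ?case by simp
next
  case (insert b F)
  have "(\<lambda>n. \<Sum>a\<in>insert b F. c a * f a n) = sc (c b) (f b) + (\<lambda>n. \<Sum>a\<in>F. c a * f a n)"
    using insert by (auto simp: sc_def)
  then show ?case using insert by simp
qed

lemma summable_inner: "x \<in> l2 \<Longrightarrow> y \<in> l2 \<Longrightarrow> summable (\<lambda>n. x n * cnj (y n))"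
proof (rule summable_comparison_test')
  assume "x \<in> l2" "y \<in> l2"
  then show "summable (\<lambda>n. (cmod (x n))^2 + (cmod (y n))^2)"
    by (intro summable_add) (auto simp: l2_def)
  show "norm (x n * cnj (y n)) \<le> (cmod (x n))^2 + (cmod (y n))^2" for n
  proof -
    have "norm (x n * cnj (y n)) = cmod (x n) * cmod (y n)" by (simp add: norm_mult)
    also have "\<dots> \<le> (cmod (x n))^2 + (cmod (y n))^2"
      using power2_diff[of "cmod (x n)" "cmod (y n)"] zero_le_power2[of "cmod (x n) - cmod (y n)"]
        zero_le_power2[of "cmod (x n)"] zero_le_power2[of "cmod (y n)"] by linarith
    finally show ?thesis .
  qed
qed

lemma suminf_sq_nonneg: "x \<in> l2 \<Longrightarrow> 0 \<le> (\<Sum>n. (cmod (x n))^2)"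
  by (simp add: l2_def suminf_nonneg)

lemma l2norm_nonneg[simp]: "x \<in> l2 \<Longrightarrow> 0 \<le> l2norm x"
  by (simp add: l2norm_def suminf_sq_nonneg)

lemma l2norm_sq: "x \<in> l2 \<Longrightarrow> (l2norm x)^2 = (\<Sum>n. (cmod (x n))^2)"
  unfolding l2norm_def l2_def by (simp add: suminf_nonneg)

lemma li_add_left: "x \<in> l2 \<Longrightarrow> y \<in> l2 \<Longrightarrow> z \<in> l2 \<Longrightarrow>
   l2inner (x + y) z = l2inner x z + l2inner y z"
  unfolding l2inner_def by (simp add: distrib_right suminf_add[symmetric] summable_inner)

lemma li_sc_left: "x \<in> l2 \<Longrightarrow> z \<in> l2 \<Longrightarrow> l2inner (sc a x) z = a * l2inner x z"
  unfolding l2inner_def by (simp add: mult.assoc suminf_mult summable_inner)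

lemma li_commute: "x \<in> l2 \<Longrightarrow> y \<in> l2 \<Longrightarrow> l2inner y x = cnj (l2inner x y)"
proof -
  assume a: "x \<in> l2" "y \<in> l2"
  have "(\<lambda>n. x n * cnj (y n)) sums l2inner x y"
    unfolding l2inner_def using summable_inner[OF a] by (simp add: summable_sums)
  then have "(\<lambda>n. cnj (x n * cnj (y n))) sums cnj (l2inner x y)"
    by (simp only: sums_cnj)
  then have "(\<lambda>n. y n * cnj (x n)) sums cnj (l2inner x y)"
    by (simp add: mult.commute)
  then show ?thesis unfolding l2inner_def by (simp add: sums_iff)
qed

lemma li_self: "x \<in> l2 \<Longrightarrow> l2inner x x = complex_of_real ((l2norm x)^2)"
  unfolding l2inner_def
  by (simp add: l2norm_sq complex_norm_square[symmetric] suminf_of_real l2_summable)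


lemma li_add_right: "x \<in> l2 \<Longrightarrow> y \<in> l2 \<Longrightarrow> z \<in> l2 \<Longrightarrow>
   l2inner z (x + y) = l2inner z x + l2inner z y"
  by (simp add: li_commute[of _ z] li_add_left)

lemma li_sc_right: "x \<in> l2 \<Longrightarrow> z \<in> l2 \<Longrightarrow> l2inner z (sc a x) = cnj a * l2inner z x"
  by (simp add: li_commute[of _ z] li_sc_left)

lemma li_uminus_left: "x \<in> l2 \<Longrightarrow> z \<in> l2 \<Longrightarrow> l2inner (- x) z = - l2inner x z"
  by (simp add: uminus_sc li_sc_left)

lemma li_uminus_right: "x \<in> l2 \<Longrightarrow> z \<in> l2 \<Longrightarrow> l2inner z (- x) = - l2inner z x"
  by (simp add: uminus_sc li_sc_right)

lemma li_diff_left: "x \<in> l2 \<Longrightarrow> y \<in> l2 \<Longrightarrow> z \<in> l2 \<Longrightarrow>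
   l2inner (x - y) z = l2inner x z - l2inner y z"
  by (metis diff_conv_add_uminus li_add_left li_uminus_left l2_uminus)

lemma li_diff_right: "x \<in> l2 \<Longrightarrow> y \<in> l2 \<Longrightarrow> z \<in> l2 \<Longrightarrow>
   l2inner z (x - y) = l2inner z x - l2inner z y"
  by (metis diff_conv_add_uminus li_add_right li_uminus_right l2_uminus)

lemma li_zero_left[simp]: "l2inner 0 z = 0"
  by (simp add: l2inner_def)

lemma li_zero_right[simp]: "l2inner z 0 = 0"
  by (simp add: l2inner_def)

lemma li_sum_left: "finite F \<Longrightarrow> (\<forall>a\<in>F. f a \<in> l2) \<Longrightarrow> y \<in> l2 \<Longrightarrow>
  l2inner (\<lambda>n. \<Sum>a\<in>F. c a * f a n) y = (\<Sum>a\<in>F. c a * l2inner (f a) y)"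
proof (induction F rule: finite_induct)
  case empty then show ?case by (simp add: zero_fun_def[symmetric])
next
  case (insert b F)
  have e: "(\<lambda>n. \<Sum>a\<in>insert b F. c a * f a n) = sc (c b) (f b) + (\<lambda>n. \<Sum>a\<in>F. c a * f a n)"
    using insert by (auto simp: sc_def)
  have "(\<lambda>n. \<Sum>a\<in>F. c a * f a n) \<in> l2" using insert l2_sum by auto
  then show ?case using insert unfolding e by (simp add: li_add_left li_sc_left)
qed

lemma l2norm_eq_sqrt_inner: "x \<in> l2 \<Longrightarrow> (l2norm x)^2 = Re (l2inner x x)"
  by (simp add: li_self)

lemma cauchy_schwarz: "x \<in> l2 \<Longrightarrow> y \<in> l2 \<Longrightarrow> cmod (l2inner x y) \<le> l2norm x * l2norm y"
proof -
  assume x: "x \<in> l2" and y: "y \<in> l2"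
  have s: "summable (\<lambda>n. cmod (x n) * cmod (y n))"
  proof (rule summable_comparison_test')
    show "summable (\<lambda>n. (cmod (x n))^2 + (cmod (y n))^2)"
      using x y by (intro summable_add) (auto simp: l2_def)
    show "norm (cmod (x n) * cmod (y n)) \<le> (cmod (x n))^2 + (cmod (y n))^2" for n
      using power2_diff[of "cmod (x n)" "cmod (y n)"] zero_le_power2[of "cmod (x n) - cmod (y n)"]
        zero_le_power2[of "cmod (x n)"] zero_le_power2[of "cmod (y n)"]
      by (simp only: real_norm_def abs_mult abs_norm_cancel)
  qed
  have "cmod (l2inner x y) \<le> (\<Sum>n. cmod (x n * cnj (y n)))"
    unfolding l2inner_def
    by (rule summable_norm) (simp add: norm_mult s)
  also have "\<dots> = (\<Sum>n. cmod (x n) * cmod (y n))" by (simp add: norm_mult)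
  also have "\<dots> \<le> l2norm x * l2norm y"
  proof (rule suminf_le_const[OF s])
    fix N
    have "(\<Sum>n<N. cmod (x n) * cmod (y n)) = (\<Sum>n<N. \<bar>cmod (x n)\<bar> * \<bar>cmod (y n)\<bar>)" by simp
    also have "\<dots> \<le> L2_set (\<lambda>n. cmod (x n)) {..<N} * L2_set (\<lambda>n. cmod (y n)) {..<N}"
      by (rule L2_set_mult_ineq)
    also have "\<dots> \<le> l2norm x * l2norm y"
    proof (rule mult_mono)
      show "L2_set (\<lambda>n. cmod (x n)) {..<N} \<le> l2norm x"
        unfolding L2_set_def l2norm_def
        by (rule real_sqrt_le_mono, rule sum_le_suminf) (use x in \<open>auto simp: l2_def\<close>)
      show "L2_set (\<lambda>n. cmod (y n)) {..<N} \<le> l2norm y"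
        unfolding L2_set_def l2norm_def
        by (rule real_sqrt_le_mono, rule sum_le_suminf) (use y in \<open>auto simp: l2_def\<close>)
    qed (use x y in \<open>auto simp: L2_set_def intro: sum_nonneg\<close>)
    finally show "(\<Sum>n<N. cmod (x n) * cmod (y n)) \<le> l2norm x * l2norm y" .
  qed
  finally show ?thesis .
qed

lemma l2norm_add_sq: "x \<in> l2 \<Longrightarrow> y \<in> l2 \<Longrightarrow>
  (l2norm (x + y))^2 = (l2norm x)^2 + (l2norm y)^2 + 2 * Re (l2inner x y)"
proof -
  assume x: "x \<in> l2" and y: "y \<in> l2"
  have "complex_of_real ((l2norm (x + y))^2) = l2inner (x+y) (x+y)" using x y by (simp add: li_self)
  also have "\<dots> = l2inner x x + l2inner x y + l2inner y x + l2inner y y"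
    using x y by (simp add: li_add_left li_add_right)
  also have "\<dots> = complex_of_real ((l2norm x)^2 + (l2norm y)^2 + 2 * Re (l2inner x y))"
    using x y by (simp add: li_self li_commute[of x y] complex_eq_iff)
  finally show ?thesis using of_real_eq_iff by blast
qed

lemma l2norm_triangle: "x \<in> l2 \<Longrightarrow> y \<in> l2 \<Longrightarrow> l2norm (x + y) \<le> l2norm x + l2norm y"
proof -
  assume x: "x \<in> l2" and y: "y \<in> l2"
  have "Re (l2inner x y) \<le> l2norm x * l2norm y"
    using cauchy_schwarz[OF x y] complex_Re_le_cmod order_trans by blast
  then have "(l2norm (x + y))^2 \<le> (l2norm x + l2norm y)^2"
  proof -
    assume r: "Re (l2inner x y) \<le> l2norm x * l2norm y"
    have "(l2norm (x + y))^2 = (l2norm x)^2 + (l2norm y)^2 + 2 * Re (l2inner x y)"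
      by (rule l2norm_add_sq[OF x y])
    also have "\<dots> \<le> (l2norm x)^2 + (l2norm y)^2 + 2 * (l2norm x * l2norm y)"
      using r by linarith
    also have "\<dots> = (l2norm x + l2norm y)^2" by (simp add: power2_sum)
    finally show ?thesis .
  qed
  then show ?thesis by (rule power2_le_imp_le) (use x y in simp)
qed

lemma l2norm_sc: "x \<in> l2 \<Longrightarrow> l2norm (sc a x) = cmod a * l2norm x"
proof -
  assume x: "x \<in> l2"
  have "(l2norm (sc a x))^2 = (cmod a)^2 * (l2norm x)^2"
    using x by (simp add: l2norm_sq norm_mult power_mult_distrib suminf_mult l2_summable)
  also have "\<dots> = (cmod a * l2norm x)^2" by (simp add: power_mult_distrib)
  finally show ?thesis using x
    by (metis l2_sc l2norm_nonneg norm_ge_zero power2_eq_iff_nonneg zero_le_mult_iff)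
qed

lemma l2norm_uminus: "x \<in> l2 \<Longrightarrow> l2norm (- x) = l2norm x"
  by (simp add: uminus_sc l2norm_sc)

lemma l2norm_commute: "x \<in> l2 \<Longrightarrow> y \<in> l2 \<Longrightarrow> l2norm (x - y) = l2norm (y - x)"
  by (metis l2_diff l2norm_uminus minus_diff_eq)

lemma l2norm_zero[simp]: "l2norm 0 = 0"
  by (simp add: l2norm_def)

lemma l2norm_eq_0: "x \<in> l2 \<Longrightarrow> l2norm x = 0 \<Longrightarrow> x = 0"
proof -
  assume x: "x \<in> l2" and "l2norm x = 0"
  then have "(\<Sum>n. (cmod (x n))^2) = 0" using l2norm_sq by force
  then have "\<forall>n. (cmod (x n))^2 = 0"
    using suminf_eq_zero_iff[OF l2_summable[OF x]] by simp
  then show "x = 0" by (auto simp: fun_eq_iff)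
qed

lemma l2norm_diff_triangle: "x \<in> l2 \<Longrightarrow> y \<in> l2 \<Longrightarrow> z \<in> l2 \<Longrightarrow>
   l2norm (x - z) \<le> l2norm (x - y) + l2norm (y - z)"
  using l2norm_triangle[of "x - y" "y - z"] by simp

lemma coord_le: "x \<in> l2 \<Longrightarrow> cmod (x k) \<le> l2norm x"
proof -
  assume x: "x \<in> l2"
  have "(cmod (x k))^2 \<le> (\<Sum>n. (cmod (x n))^2)"
    using sum_le_suminf[OF l2_summable[OF x], of "{k}"] by simp
  then have "(cmod (x k))^2 \<le> (l2norm x)^2" using x by (simp add: l2norm_sq)
  then show ?thesis by (rule power2_le_imp_le) (use x in simp)
qed

lemma l2norm_parallelogram: "x \<in> l2 \<Longrightarrow> y \<in> l2 \<Longrightarrow>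
  (l2norm (x + y))^2 + (l2norm (x - y))^2 = 2 * (l2norm x)^2 + 2 * (l2norm y)^2"
  using l2norm_add_sq[of x y] l2norm_add_sq[of x "- y"]
  by (simp add: l2norm_uminus li_uminus_right)


definition l2lim :: "(nat \<Rightarrow> nat \<Rightarrow> complex) \<Rightarrow> (nat \<Rightarrow> complex) \<Rightarrow> bool" where
  "l2lim u x \<longleftrightarrow> (\<lambda>k. l2norm (u k - x)) \<longlonglongrightarrow> 0"

lemma sum_fun_apply: "(\<Sum>n\<in>F. v n) k = (\<Sum>n\<in>F. v n k)"
  by (induction F rule: infinite_finite_induct) auto

lemma l2_sumf: "(\<And>n. n \<in> F \<Longrightarrow> v n \<in> l2) \<Longrightarrow> (\<Sum>n\<in>F. v n) \<in> l2"
  by (induction F rule: infinite_finite_induct) auto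

lemma l2norm_sumf: "(\<And>n. n \<in> F \<Longrightarrow> v n \<in> l2) \<Longrightarrow> l2norm (\<Sum>n\<in>F. v n) \<le> (\<Sum>n\<in>F. l2norm (v n))"
proof (induction F rule: infinite_finite_induct)
  case (insert a F)
  have "l2norm (\<Sum>n\<in>insert a F. v n) = l2norm (v a + (\<Sum>n\<in>F. v n))" using insert by simp
  also have "\<dots> \<le> l2norm (v a) + l2norm (\<Sum>n\<in>F. v n)"
    using insert by (intro l2norm_triangle l2_sumf) auto
  also have "\<dots> \<le> l2norm (v a) + (\<Sum>n\<in>F. l2norm (v n))" using insert by simp
  also have "\<dots> = (\<Sum>n\<in>insert a F. l2norm (v n))" using insert(1,2) by simp
  finally show ?case .
qed auto

lemma lim_unique: "(\<And>k. u k \<in> l2) \<Longrightarrow> x \<in> l2 \<Longrightarrow> y \<in> l2 \<Longrightarrow> l2lim u x \<Longrightarrow> l2lim u y \<Longrightarrow> x = y"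
proof -
  assume u: "\<And>k. u k \<in> l2" and x: "x \<in> l2" and y: "y \<in> l2" and lx: "l2lim u x" and ly: "l2lim u y"
  have t: "(\<lambda>k. l2norm (u k - x) + l2norm (u k - y)) \<longlonglongrightarrow> 0"
    using tendsto_add[OF lx[unfolded l2lim_def] ly[unfolded l2lim_def]] by simp
  have "l2norm (x - y) \<le> l2norm (u k - x) + l2norm (u k - y)" for k
    using l2norm_diff_triangle[OF x u[of k] y] l2norm_commute[OF x u[of k]] by simp
  then have "l2norm (x - y) \<le> 0" by (intro LIMSEQ_le_const[OF t]) auto
  then have "l2norm (x - y) = 0" using x y by (meson antisym l2_diff l2norm_nonneg)
  then show "x = y" using l2norm_eq_0[of "x - y"] x y by simp
qed

lemma lim_inner: "(\<And>k. u k \<in> l2) \<Longrightarrow> x \<in> l2 \<Longrightarrow> h \<in> l2 \<Longrightarrow> l2lim u x \<Longrightarrow>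
  (\<lambda>k. l2inner (u k) h) \<longlonglongrightarrow> l2inner x h"
proof -
  assume u: "\<And>k. u k \<in> l2" and x: "x \<in> l2" and h: "h \<in> l2" and l: "l2lim u x"
  have "(\<lambda>k. l2inner (u k) h - l2inner x h) \<longlonglongrightarrow> 0"
  proof (rule Lim_null_comparison)
    show "\<forall>\<^sub>F k in sequentially. norm (l2inner (u k) h - l2inner x h) \<le> l2norm (u k - x) * l2norm h"
      using cauchy_schwarz[of "u k - x" h for k] u x h by (simp add: li_diff_left)
    show "(\<lambda>k. l2norm (u k - x) * l2norm h) \<longlonglongrightarrow> 0"
      using l unfolding l2lim_def by (metis mult_zero_left tendsto_mult_right)
  qed
  then show ?thesis by (simp add: LIM_zero_cancel)
qed

lemma lim_norm: "(\<And>k. u k \<in> l2) \<Longrightarrow> x \<in> l2 \<Longrightarrow> a \<in> l2 \<Longrightarrow> l2lim u x \<Longrightarrow>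
  (\<lambda>k. l2norm (a - u k)) \<longlonglongrightarrow> l2norm (a - x)"
proof -
  assume u: "\<And>k. u k \<in> l2" and x: "x \<in> l2" and a: "a \<in> l2" and l: "l2lim u x"
  have "(\<lambda>k. l2norm (a - u k) - l2norm (a - x)) \<longlonglongrightarrow> 0"
  proof (rule Lim_null_comparison)
    show "\<forall>\<^sub>F k in sequentially. norm (l2norm (a - u k) - l2norm (a - x)) \<le> l2norm (u k - x)"
    proof (rule always_eventually, rule allI)
      fix k
      have 1: "l2norm (a - u k) \<le> l2norm (a - x) + l2norm (x - u k)"
        using l2norm_diff_triangle[OF a x u] by simp
      have 2: "l2norm (a - x) \<le> l2norm (a - u k) + l2norm (u k - x)"
        using l2norm_diff_triangle[OF a u x] by simp
      show "norm (l2norm (a - u k) - l2norm (a - x)) \<le> l2norm (u k - x)"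
        using 1 2 l2norm_commute[OF x u[of k]] by simp
    qed
    show "(\<lambda>k. l2norm (u k - x)) \<longlonglongrightarrow> 0" using l unfolding l2lim_def .
  qed
  then show ?thesis by (simp add: LIM_zero_cancel)
qed

lemma lim_add:
  assumes u: "\<And>k. u k \<in> l2" and v: "\<And>k. v k \<in> l2" and x: "x \<in> l2" and y: "y \<in> l2"
    and lu0: "l2lim u x" and lv0: "l2lim v y"
  shows "l2lim (\<lambda>k. u k + v k) (x + y)"
proof -
  have lu: "(\<lambda>k. l2norm (u k - x)) \<longlonglongrightarrow> 0" and lv: "(\<lambda>k. l2norm (v k - y)) \<longlonglongrightarrow> 0"
    using lu0 lv0 by (auto simp: l2lim_def)
  have "(\<lambda>k. l2norm (u k + v k - (x + y))) \<longlonglongrightarrow> 0"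
  proof (rule Lim_null_comparison)
    show "\<forall>\<^sub>F k in sequentially. norm (l2norm (u k + v k - (x + y))) \<le> l2norm (u k - x) + l2norm (v k - y)"
    proof (rule always_eventually, rule allI)
      fix k
      have e: "u k + v k - (x + y) = (u k - x) + (v k - y)" by simp
      show "norm (l2norm (u k + v k - (x + y))) \<le> l2norm (u k - x) + l2norm (v k - y)"
        unfolding e using l2norm_triangle[of "u k - x" "v k - y"] u v x y by simp
    qed
    show "(\<lambda>k. l2norm (u k - x) + l2norm (v k - y)) \<longlonglongrightarrow> 0"
      using tendsto_add[OF lu lv] by simp
  qed
  then show ?thesis by (simp add: l2lim_def)
qed

lemma lim_sc: "(\<And>k. u k \<in> l2) \<Longrightarrow> x \<in> l2 \<Longrightarrow> l2lim u x \<Longrightarrow> l2lim (\<lambda>k. sc a (u k)) (sc a x)"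
proof -
  assume u: "\<And>k. u k \<in> l2" and x: "x \<in> l2" and l: "l2lim u x"
  have e: "sc a (u k) - sc a x = sc a (u k - x)" for k by (auto simp: sc_def algebra_simps)
  show ?thesis using l u x unfolding l2lim_def
    by (simp add: e l2norm_sc) (metis mult_zero_right tendsto_mult_left)
qed

lemma lim_const: "l2lim (\<lambda>k. x) x"
  unfolding l2lim_def by simp

lemma lim_shift: "l2lim u x \<Longrightarrow> l2lim (\<lambda>k. u (Suc k)) x"
  unfolding l2lim_def using LIMSEQ_Suc by fastforce

lemma contr_l2: "is_contraction C \<Longrightarrow> x \<in> l2 \<Longrightarrow> C x \<in> l2"
  by (simp add: is_contraction_def)

lemma contr_norm: "is_contraction C \<Longrightarrow> x \<in> l2 \<Longrightarrow> l2norm (C x) \<le> l2norm x"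
  by (simp add: is_contraction_def)

lemma contr_lc: "is_contraction C \<Longrightarrow> x \<in> l2 \<Longrightarrow> y \<in> l2 \<Longrightarrow>
   C (\<lambda>n. a * x n + b * y n) = (\<lambda>n. a * C x n + b * C y n)"
  by (simp add: is_contraction_def)

lemma contr_add: "is_contraction C \<Longrightarrow> x \<in> l2 \<Longrightarrow> y \<in> l2 \<Longrightarrow> C (x + y) = C x + C y"
  using contr_lc[of C x y 1 1] by (simp add: plus_fun_def)

lemma contr_sc: "is_contraction C \<Longrightarrow> x \<in> l2 \<Longrightarrow> C (sc a x) = sc a (C x)"
  using contr_lc[of C x x a 0] by (simp add: sc_def)

lemma contr_zero: "is_contraction C \<Longrightarrow> C 0 = 0"
  using contr_sc[of C 0 0] by (simp add: sc_def zero_fun_def)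

lemma contr_uminus: "is_contraction C \<Longrightarrow> x \<in> l2 \<Longrightarrow> C (- x) = - C x"
  unfolding uminus_sc by (rule contr_sc)

lemma contr_diff: "is_contraction C \<Longrightarrow> x \<in> l2 \<Longrightarrow> y \<in> l2 \<Longrightarrow> C (x - y) = C x - C y"
  by (metis contr_add contr_uminus diff_conv_add_uminus l2_uminus)

lemma contr_sumf: "is_contraction C \<Longrightarrow> (\<And>n. n \<in> F \<Longrightarrow> v n \<in> l2) \<Longrightarrow> C (\<Sum>n\<in>F. v n) = (\<Sum>n\<in>F. C (v n))"
proof (induction F rule: infinite_finite_induct)
  case (infinite A) then show ?case using contr_zero[of C] by (simp add: zero_fun_def)
next
  case empty then show ?case using contr_zero[of C] by (simp add: zero_fun_def)
next
  case (insert a F)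
  have "C (\<Sum>n\<in>insert a F. v n) = C (v a + (\<Sum>n\<in>F. v n))"
    by (rule arg_cong[where f=C]) (rule sum.insert[OF insert(1,2)])
  also have "\<dots> = C (v a) + C (\<Sum>n\<in>F. v n)"
    using insert by (intro contr_add l2_sumf) auto
  also have "\<dots> = C (v a) + (\<Sum>n\<in>F. C (v n))" using insert by simp
  also have "\<dots> = (\<Sum>n\<in>insert a F. C (v n))" by (rule sum.insert[OF insert(1,2), symmetric])
  finally show ?case .
qed

lemma lim_contr:
  assumes C: "is_contraction C" and u: "\<And>k. u k \<in> l2" and x: "x \<in> l2" and l0: "l2lim u x"
  shows "l2lim (\<lambda>k. C (u k)) (C x)"
proof -
  have l: "(\<lambda>k. l2norm (u k - x)) \<longlonglongrightarrow> 0" using l0 by (simp add: l2lim_def)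
  have "(\<lambda>k. l2norm (C (u k) - C x)) \<longlonglongrightarrow> 0"
  proof (rule Lim_null_comparison[OF _ l], rule always_eventually, rule allI)
    fix k
    show "norm (l2norm (C (u k) - C x)) \<le> l2norm (u k - x)"
      using contr_diff[OF C u x, of k] contr_norm[OF C, of "u k - x"] contr_l2[OF C] u x by simp
  qed
  then show ?thesis by (simp add: l2lim_def)
qed

lemma contr_comp: "is_contraction A \<Longrightarrow> is_contraction B \<Longrightarrow> is_contraction (A \<circ> B)"
  unfolding is_contraction_def comp_def
  by (auto intro: order_trans) (meson order_trans)

lemma contr_id: "is_contraction id"
  unfolding is_contraction_def by simp

lemma contr_pow: "is_contraction C \<Longrightarrow> is_contraction (C ^^ n)"
  by (induction n) (auto simp: contr_id contr_comp)


lemma l2_complete: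
  assumes u: "\<And>k. u k \<in> l2" and C: "\<And>e. e > 0 \<Longrightarrow> \<exists>N. \<forall>m\<ge>N. \<forall>n\<ge>N. l2norm (u m - u n) < e"
  shows "\<exists>x\<in>l2. l2lim u x"
proof -
  have cj: "Cauchy (\<lambda>k. u k j)" for j
  proof (rule CauchyI)
    fix e :: real assume "e > 0"
    then obtain N where N: "\<forall>m\<ge>N. \<forall>n\<ge>N. l2norm (u m - u n) < e" using C by blast
    have "norm (u m j - u n j) < e" if "m \<ge> N" "n \<ge> N" for m n
    proof -
      have "norm (u m j - u n j) = norm ((u m - u n) j)" by simp
      also have "\<dots> \<le> l2norm (u m - u n)" by (rule coord_le[OF l2_diff[OF u u]])
      also have "\<dots> < e" using N that by blast
      finally show ?thesis .
    qed
    then show "\<exists>M. \<forall>m\<ge>M. \<forall>n\<ge>M. norm (u m j - u n j) < e" by blast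
  qed
  define x where "x j = lim (\<lambda>k. u k j)" for j
  have xl: "(\<lambda>k. u k j) \<longlonglongrightarrow> x j" for j
    using cj[of j] unfolding x_def by (simp add: Cauchy_convergent_iff convergent_LIMSEQ_iff)
  have key: "\<exists>N. \<forall>n\<ge>N. u n - x \<in> l2 \<and> l2norm (u n - x) \<le> e" if e: "e > 0" for e
  proof -
    obtain N where N: "\<forall>m\<ge>N. \<forall>n\<ge>N. l2norm (u m - u n) < e" using C e by blast
    have "u n - x \<in> l2 \<and> l2norm (u n - x) \<le> e" if n: "n \<ge> N" for n
    proof -
      have ps: "(\<Sum>j<M. (cmod ((u n - x) j))^2) \<le> e^2" for M
      proof -
        have lim: "(\<lambda>m. \<Sum>j<M. (cmod (u n j - u m j))^2) \<longlonglongrightarrow> (\<Sum>j<M. (cmod (u n j - x j))^2)"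
          by (intro tendsto_intros xl)
        have "(\<Sum>j<M. (cmod (u n j - u m j))^2) \<le> e^2" if m: "m \<ge> N" for m
        proof -
          have "(\<Sum>j<M. (cmod (u n j - u m j))^2) = (\<Sum>j<M. (cmod ((u n - u m) j))^2)" by simp
          also have "\<dots> \<le> (\<Sum>j. (cmod ((u n - u m) j))^2)"
            by (rule sum_le_suminf[OF l2_summable[OF l2_diff[OF u u]]]) auto
          also have "\<dots> = (l2norm (u n - u m))^2" using u by (simp add: l2norm_sq)
          also have "\<dots> \<le> e^2"
          proof (rule power_mono)
            show "l2norm (u n - u m) \<le> e" using N n m by (simp add: less_imp_le)
          qed (use u in simp)
          finally show ?thesis .
        qed
        then have "(\<Sum>j<M. (cmod (u n j - x j))^2) \<le> e^2"
          by (intro LIMSEQ_le_const2[OF lim]) auto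
        then show ?thesis by simp
      qed
      have sm: "summable (\<lambda>j. (cmod ((u n - x) j))^2)"
        by (rule summableI_nonneg_bounded[where x = "e^2"]) (use ps in auto)
      then have ul: "u n - x \<in> l2" by (simp add: l2_def)
      have "(l2norm (u n - x))^2 \<le> e^2"
        using ul suminf_le_const[OF sm ps] by (simp add: l2norm_sq)
      then have "l2norm (u n - x) \<le> e" by (rule power2_le_imp_le) (use e in simp)
      with ul show ?thesis by simp
    qed
    then show ?thesis by blast
  qed
  obtain N where "\<forall>n\<ge>N. u n - x \<in> l2 \<and> l2norm (u n - x) \<le> 1" using key[of 1] by auto
  then have "u N - x \<in> l2" by auto
  then have xin: "x \<in> l2" using l2_diff[OF u[of N] \<open>u N - x \<in> l2\<close>] by simp
  have "l2lim u x" unfolding l2lim_def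
  proof (rule LIMSEQ_I)
    fix r :: real assume r: "r > 0"
    obtain N where N: "\<forall>n\<ge>N. u n - x \<in> l2 \<and> l2norm (u n - x) \<le> r/2" using key[of "r/2"] r by auto
    have "norm (l2norm (u n - x) - 0) < r" if "n \<ge> N" for n
      using N that r u xin by auto
    then show "\<exists>no. \<forall>n\<ge>no. norm (l2norm (u n - x) - 0) < r" by blast
  qed
  with xin show ?thesis by blast
qed

lemma sum_split_nat: "(m::nat) \<le> n \<Longrightarrow> (\<Sum>i<n. f i) = (\<Sum>i<m. f i) + (\<Sum>i\<in>{m..<n}. (f i :: 'a::comm_monoid_add))"
proof -
  assume "m \<le> n"
  then have e: "{..<n} = {..<m} \<union> {m..<n}" by auto
  show ?thesis unfolding e by (rule sum.union_disjoint) auto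
qed

lemma l2_series:
  assumes v: "\<And>n. v n \<in> l2" and s: "summable (\<lambda>n. l2norm (v n))"
  shows "\<exists>x\<in>l2. l2lim (\<lambda>N. \<Sum>n<N. v n) x"
proof (rule l2_complete)
  show "(\<Sum>n<k. v n) \<in> l2" for k using v by (simp add: l2_sumf)
  fix e :: real assume e: "e > 0"
  obtain N where N: "\<forall>m\<ge>N. \<forall>n. norm (sum (\<lambda>n. l2norm (v n)) {m..<n}) < e"
    using s e unfolding summable_Cauchy by blast
  have d: "l2norm ((\<Sum>i<n. v i) - (\<Sum>i<m. v i)) < e" if "m \<ge> N" "m \<le> n" for m n
  proof -
    have "(\<Sum>i<n. v i) - (\<Sum>i<m. v i) = (\<Sum>i\<in>{m..<n}. v i)"
      using sum_split_nat[OF that(2), of v] by simp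
    then have "l2norm ((\<Sum>i<n. v i) - (\<Sum>i<m. v i)) \<le> (\<Sum>i\<in>{m..<n}. l2norm (v i))"
      using l2norm_sumf[of "{m..<n}" v] v by simp
    also have "\<dots> < e" using N that by (simp add: sum_nonneg v)
    finally show ?thesis .
  qed
  have "l2norm ((\<Sum>i<m. v i) - (\<Sum>i<n. v i)) < e" if "m \<ge> N" "n \<ge> N" for m n
  proof (cases "m \<le> n")
    case True
    then show ?thesis using d[OF that(1) True] l2norm_commute[of "\<Sum>i<m. v i" "\<Sum>i<n. v i"] v
      by (simp add: l2_sumf)
  next
    case False
    then show ?thesis using d[OF that(2)] by simp
  qed
  then show "\<exists>N. \<forall>m\<ge>N. \<forall>n\<ge>N. l2norm ((\<Sum>i<m. v i) - (\<Sum>i<n. v i)) < e" by blast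
qed


lemma li_zero_left'[simp]: "l2inner (\<lambda>a. 0) z = 0"
  by (simp add: l2inner_def)
lemma li_zero_right'[simp]: "l2inner z (\<lambda>a. 0) = 0"
  by (simp add: l2inner_def)
lemma l2norm_zero'[simp]: "l2norm (\<lambda>a. 0) = 0"
  by (simp add: l2norm_def)

definition ev :: "nat \<Rightarrow> nat \<Rightarrow> complex" where "ev j = (\<lambda>k. if k = j then 1 else 0)"
definition trunc :: "nat \<Rightarrow> (nat \<Rightarrow> complex) \<Rightarrow> nat \<Rightarrow> complex" where
  "trunc N x = (\<lambda>k. if k < N then x k else 0)"

lemma l2_ev[simp]: "ev j \<in> l2"
  unfolding l2_def ev_def mem_Collect_eq by (rule summable_finite[of "{j}"]) auto

lemma l2_trunc[simp]: "trunc N x \<in> l2"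
  unfolding l2_def trunc_def mem_Collect_eq by (rule summable_finite[of "{..<N}"]) auto

lemma trunc_sum: "trunc N x = (\<Sum>j<N. sc (x j) (ev j))"
proof
  fix k
  have "(\<Sum>j<N. sc (x j) (ev j)) k = (\<Sum>j<N. x j * (if k = j then 1 else 0))"
    by (simp add: sum_fun_apply ev_def)
  also have "\<dots> = (\<Sum>j<N. (if k = j then x j else 0))" by (rule sum.cong) auto
  also have "\<dots> = trunc N x k" by (simp add: trunc_def)
  finally show "trunc N x k = (\<Sum>j<N. sc (x j) (ev j)) k" by simp
qed

lemma li_trunc_left: "l2inner (trunc N x) z = (\<Sum>j<N. x j * cnj (z j))"
  unfolding l2inner_def trunc_def by (subst suminf_finite[of "{..<N}"]) auto

lemma T_trunc:
  assumes T: "is_contraction T" and y: "y \<in> l2"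
  shows "l2inner (T (trunc N x)) y = (\<Sum>j<N. x j * l2inner (T (ev j)) y)"
proof -
  have "T (trunc N x) = (\<Sum>j<N. sc (x j) (T (ev j)))"
    unfolding trunc_sum by (simp add: contr_sumf[OF T] contr_sc[OF T])
  moreover have "l2inner (\<Sum>j\<in>F. sc (x j) (T (ev j))) y = (\<Sum>j\<in>F. x j * l2inner (T (ev j)) y)"
    if "finite F" for F
    using that
  proof (induction F rule: finite_induct)
    case empty then show ?case by simp
  next
    case (insert a F)
    have "l2inner (\<Sum>j\<in>insert a F. sc (x j) (T (ev j))) y =
          l2inner (sc (x a) (T (ev a)) + (\<Sum>j\<in>F. sc (x j) (T (ev j)))) y"
      by (rule arg_cong[where f="\<lambda>v. l2inner v y"]) (rule sum.insert[OF insert(1,2)])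
    also have "\<dots> = x a * l2inner (T (ev a)) y + l2inner (\<Sum>j\<in>F. sc (x j) (T (ev j))) y"
      using T y by (simp add: li_add_left li_sc_left contr_l2 l2_sumf)
    also have "\<dots> = x a * l2inner (T (ev a)) y + (\<Sum>j\<in>F. x j * l2inner (T (ev j)) y)"
      by (simp only: insert.IH)
    also have "\<dots> = (\<Sum>j\<in>insert a F. x j * l2inner (T (ev j)) y)"
      by (rule sum.insert[OF insert(1,2), symmetric])
    finally show ?case .
  qed
  ultimately show ?thesis by simp
qed

lemma trunc_lim: "x \<in> l2 \<Longrightarrow> l2lim (\<lambda>N. trunc N x) x"
proof -
  assume x: "x \<in> l2"
  define f where "f k = (cmod (x k))^2" for k
  have fs: "summable f" unfolding f_def using x by (simp add: l2_def)
  have sq: "(l2norm (trunc N x - x))^2 = suminf f - (\<Sum>k<N. f k)" for N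
  proof -
    have d: "trunc N x - x \<in> l2" using x by simp
    have "(l2norm (trunc N x - x))^2 = (\<Sum>k. (cmod ((trunc N x - x) k))^2)"
      by (rule l2norm_sq[OF d])
    also have "\<dots> = (\<Sum>k. f k - (if k < N then f k else 0))"
      by (intro arg_cong[where f=suminf] ext) (simp add: trunc_def f_def)
    also have "\<dots> = suminf f - (\<Sum>k. (if k < N then f k else 0))"
      using suminf_diff[OF fs summable_finite[of "{..<N}" "\<lambda>k. if k < N then f k else 0"]] by auto
    also have "(\<Sum>k. (if k < N then f k else 0)) = (\<Sum>k<N. f k)"
      by (subst suminf_finite[of "{..<N}"]) auto
    finally show ?thesis .
  qed
  have "(\<lambda>N. suminf f - (\<Sum>k<N. f k)) \<longlonglongrightarrow> 0"
    using tendsto_diff[OF tendsto_const[of "suminf f"] summable_LIMSEQ[OF fs]] by simp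
  then have "(\<lambda>N. (l2norm (trunc N x - x))^2) \<longlonglongrightarrow> 0" by (simp add: sq)
  then have "(\<lambda>N. sqrt ((l2norm (trunc N x - x))^2)) \<longlonglongrightarrow> 0"
    using tendsto_real_sqrt by fastforce
  then show ?thesis unfolding l2lim_def using x by simp
qed

lemma l2norm_trunc: "l2norm (trunc N z) = sqrt (\<Sum>j<N. (cmod (z j))^2)"
  unfolding l2norm_def trunc_def by (subst suminf_finite[of "{..<N}"]) auto

lemma adjoint_exists:
  assumes T: "is_contraction T" and y: "y \<in> l2"
  shows "\<exists>z\<in>l2. \<forall>x\<in>l2. l2inner (T x) y = l2inner x z"
proof -
  define z where "z j = cnj (l2inner (T (ev j)) y)" for j
  have Tt: "l2inner (T (trunc N x)) y = (\<Sum>j<N. x j * cnj (z j))" for N x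
    using T_trunc[OF T y] by (simp add: z_def)
  have ps: "(\<Sum>j<N. (cmod (z j))^2) \<le> (l2norm y)^2" for N
  proof -
    define S where "S = (\<Sum>j<N. (cmod (z j))^2)"
    have S0: "0 \<le> S" unfolding S_def by (simp add: sum_nonneg)
    have "l2inner (T (trunc N z)) y = (\<Sum>j<N. z j * cnj (z j))" by (rule Tt)
    also have "\<dots> = (\<Sum>j<N. complex_of_real ((cmod (z j))^2))"
      by (rule sum.cong) (simp_all only: complex_norm_square)
    also have "\<dots> = complex_of_real S" unfolding S_def by (simp only: of_real_sum)
    finally have e1: "l2inner (T (trunc N z)) y = complex_of_real S" .
    have nt: "l2norm (trunc N z) = sqrt S" unfolding S_def by (rule l2norm_trunc)
    have "S = cmod (l2inner (T (trunc N z)) y)" using e1 S0 by simp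
    also have "\<dots> \<le> l2norm (T (trunc N z)) * l2norm y"
      by (rule cauchy_schwarz[OF contr_l2[OF T l2_trunc] y])
    also have "\<dots> \<le> l2norm (trunc N z) * l2norm y"
      by (rule mult_right_mono[OF contr_norm[OF T l2_trunc]]) (use y in simp)
    finally have le: "S \<le> sqrt S * l2norm y" using nt by simp
    show ?thesis
    proof (cases "S = 0")
      case True then show ?thesis unfolding S_def[symmetric] by simp
    next
      case False
      then have sp: "sqrt S > 0" using S0 by simp
      have "sqrt S * sqrt S \<le> sqrt S * l2norm y" using le S0 by simp
      then have "sqrt S \<le> l2norm y" using sp by (rule mult_left_le_imp_le)
      then have "(sqrt S)^2 \<le> (l2norm y)^2" by (rule power_mono) (use S0 in simp)
      then show ?thesis unfolding S_def[symmetric] using S0 by simp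
    qed
  qed
  have zl: "z \<in> l2" unfolding l2_def mem_Collect_eq
    by (rule summableI_nonneg_bounded[where x="(l2norm y)^2"]) (use ps in auto)
  have "l2inner (T x) y = l2inner x z" if x: "x \<in> l2" for x
  proof -
    have l1: "(\<lambda>N. l2inner (T (trunc N x)) y) \<longlonglongrightarrow> l2inner (T x) y"
      by (rule lim_inner[OF contr_l2[OF T l2_trunc] contr_l2[OF T x] y lim_contr[OF T l2_trunc x trunc_lim[OF x]]])
    have l2: "(\<lambda>N. l2inner (T (trunc N x)) y) \<longlonglongrightarrow> l2inner x z"
    proof -
      have "(\<lambda>N. \<Sum>j<N. x j * cnj (z j)) \<longlonglongrightarrow> l2inner x z"
        unfolding l2inner_def by (rule summable_LIMSEQ[OF summable_inner[OF x zl]])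
      then show ?thesis by (simp only: Tt)
    qed
    show ?thesis using LIMSEQ_unique[OF l1 l2] .
  qed
  with zl show ?thesis by blast
qed

lemma li_ext: "z1 \<in> l2 \<Longrightarrow> z2 \<in> l2 \<Longrightarrow> (\<forall>x\<in>l2. l2inner x z1 = l2inner x z2) \<Longrightarrow> z1 = z2"
proof -
  assume z1: "z1 \<in> l2" and z2: "z2 \<in> l2" and h: "\<forall>x\<in>l2. l2inner x z1 = l2inner x z2"
  have d: "z1 - z2 \<in> l2" using z1 z2 by simp
  have "l2inner (z1 - z2) (z1 - z2) = l2inner (z1 - z2) z1 - l2inner (z1 - z2) z2"
    by (rule li_diff_right[OF z1 z2 d])
  also have "\<dots> = 0" using h d by simp
  finally have "complex_of_real ((l2norm (z1 - z2))^2) = 0" using li_self[OF d] by simp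
  then have "l2norm (z1 - z2) = 0" by simp
  then have "z1 - z2 = 0" by (rule l2norm_eq_0[OF d])
  then show "z1 = z2" by simp
qed

lemma adjoint_char:
  assumes T: "is_contraction T" and y: "y \<in> l2"
  shows "Defs.adjoint T y \<in> l2 \<and> (\<forall>x\<in>l2. l2inner (T x) y = l2inner x (Defs.adjoint T y))"
proof -
  have "\<exists>!z. z \<in> l2 \<and> (\<forall>x\<in>l2. l2inner (T x) y = l2inner x z)"
  proof (rule ex_ex1I)
    show "\<exists>z. z \<in> l2 \<and> (\<forall>x\<in>l2. l2inner (T x) y = l2inner x z)" using adjoint_exists[OF T y] by blast
    fix z1 z2 assume "z1 \<in> l2 \<and> (\<forall>x\<in>l2. l2inner (T x) y = l2inner x z1)"
      "z2 \<in> l2 \<and> (\<forall>x\<in>l2. l2inner (T x) y = l2inner x z2)"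
    then show "z1 = z2" using li_ext[of z1 z2] by auto
  qed
  then show ?thesis unfolding Defs.adjoint_def by (rule theI')
qed

lemma adj_l2: "is_contraction T \<Longrightarrow> y \<in> l2 \<Longrightarrow> Defs.adjoint T y \<in> l2"
  using adjoint_char by blast

lemma adj_inner: "is_contraction T \<Longrightarrow> x \<in> l2 \<Longrightarrow> y \<in> l2 \<Longrightarrow> l2inner (T x) y = l2inner x (Defs.adjoint T y)"
  using adjoint_char by blast

lemma adj_inner2: "is_contraction T \<Longrightarrow> x \<in> l2 \<Longrightarrow> y \<in> l2 \<Longrightarrow> l2inner (Defs.adjoint T x) y = l2inner x (T y)"
proof -
  assume T: "is_contraction T" and x: "x \<in> l2" and y: "y \<in> l2"
  have "l2inner (Defs.adjoint T x) y = cnj (l2inner y (Defs.adjoint T x))"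
    by (rule li_commute[OF y adj_l2[OF T x]])
  also have "\<dots> = cnj (l2inner (T y) x)" using adj_inner[OF T y x] by simp
  also have "\<dots> = l2inner x (T y)" using li_commute[OF x contr_l2[OF T y]] by simp
  finally show ?thesis .
qed

lemma adjoint_eqI: "is_contraction T \<Longrightarrow> y \<in> l2 \<Longrightarrow> z \<in> l2 \<Longrightarrow>
   (\<forall>x\<in>l2. l2inner (T x) y = l2inner x z) \<Longrightarrow> Defs.adjoint T y = z"
  using li_ext[of "Defs.adjoint T y" z] adjoint_char[of T y] by auto

lemma adj_contr:
  assumes T: "is_contraction T"
  shows "is_contraction (Defs.adjoint T)"
proof -
  let ?A = "Defs.adjoint T"
  have lin: "?A (\<lambda>n. a * x n + b * y n) = (\<lambda>n. a * ?A x n + b * ?A y n)"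
    if x: "x \<in> l2" and y: "y \<in> l2" for x y a b
  proof (rule adjoint_eqI[OF T])
    show "(\<lambda>n. a * x n + b * y n) \<in> l2" using x y by simp
    show "(\<lambda>n. a * ?A x n + b * ?A y n) \<in> l2" using adj_l2[OF T x] adj_l2[OF T y] by simp
    show "\<forall>v\<in>l2. l2inner (T v) (\<lambda>n. a * x n + b * y n) = l2inner v (\<lambda>n. a * ?A x n + b * ?A y n)"
    proof
      fix v assume v: "v \<in> l2"
      have Tv: "T v \<in> l2" by (rule contr_l2[OF T v])
      have "l2inner (T v) (\<lambda>n. a * x n + b * y n) = l2inner (T v) (sc a x + sc b y)" by (simp only: lc_eq)
      also have "\<dots> = cnj a * l2inner (T v) x + cnj b * l2inner (T v) y"
        using x y Tv by (simp add: li_add_right li_sc_right)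
      also have "\<dots> = cnj a * l2inner v (?A x) + cnj b * l2inner v (?A y)"
        using adj_inner[OF T v x] adj_inner[OF T v y] by simp
      also have "\<dots> = l2inner v (sc a (?A x) + sc b (?A y))"
        using adj_l2[OF T x] adj_l2[OF T y] v by (simp add: li_add_right li_sc_right)
      also have "\<dots> = l2inner v (\<lambda>n. a * ?A x n + b * ?A y n)" by (simp only: lc_eq)
      finally show "l2inner (T v) (\<lambda>n. a * x n + b * y n) = l2inner v (\<lambda>n. a * ?A x n + b * ?A y n)" .
    qed
  qed
  have nrm: "l2norm (?A y) \<le> l2norm y" if y: "y \<in> l2" for y
  proof -
    have Ay: "?A y \<in> l2" by (rule adj_l2[OF T y])
    have "(l2norm (?A y))^2 = Re (l2inner (?A y) (?A y))" by (simp add: li_self[OF Ay])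
    also have "\<dots> = Re (l2inner (T (?A y)) y)" using adj_inner[OF T Ay y] by simp
    also have "\<dots> \<le> cmod (l2inner (T (?A y)) y)" by (rule complex_Re_le_cmod)
    also have "\<dots> \<le> l2norm (T (?A y)) * l2norm y" by (rule cauchy_schwarz[OF contr_l2[OF T Ay] y])
    also have "\<dots> \<le> l2norm (?A y) * l2norm y"
      by (rule mult_right_mono[OF contr_norm[OF T Ay]]) (use y in simp)
    finally have le: "(l2norm (?A y))^2 \<le> l2norm (?A y) * l2norm y" .
    show ?thesis
    proof (cases "l2norm (?A y) = 0")
      case True then show ?thesis using y by simp
    next
      case False
      then have "l2norm (?A y) > 0" using Ay l2norm_nonneg[OF Ay] by linarith
      then show ?thesis using le by (simp add: power2_eq_square)
    qed
  qed
  show ?thesis unfolding is_contraction_def using adj_l2[OF T] lin nrm by blast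
qed


lemma orth_from_min:
  assumes h: "h \<in> l2" and s: "s \<in> l2"
    and m: "\<And>c. (l2norm h)^2 \<le> (l2norm (h + sc c s))^2"
  shows "l2inner s h = 0"
proof -
  define \<beta> where "\<beta> = l2inner h s"
  have expand: "(l2norm (h + sc c s))^2 = (l2norm h)^2 + (cmod c)^2 * (l2norm s)^2 + 2 * Re (cnj c * \<beta>)" for c
    using l2norm_add_sq[OF h l2_sc[OF s, of c]] by (simp add: l2norm_sc[OF s] li_sc_right[OF s h] \<beta>_def power_mult_distrib)
  have "\<beta> = 0"
  proof (rule ccontr)
    assume nz: "\<beta> \<noteq> 0"
    define t :: real where "t = 1 / ((l2norm s)^2 + 1)"
    have p: "(l2norm s)^2 + 1 > 0" using zero_le_power2[of "l2norm s"] by linarith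
    have t0: "t > 0" unfolding t_def using p by simp
    have ts: "t * (l2norm s)^2 < 1" unfolding t_def using p by (simp add: field_simps)
    define c where "c = - complex_of_real t * \<beta>"
    have e1: "cnj c * \<beta> = - (complex_of_real t * (\<beta> * cnj \<beta>))" unfolding c_def by (simp add: algebra_simps)
    have e2: "\<beta> * cnj \<beta> = complex_of_real ((cmod \<beta>)^2)" by (rule complex_norm_square[symmetric])
    have "Re (cnj c * \<beta>) = - t * (cmod \<beta>)^2" unfolding e1 e2 by simp
    moreover have "(cmod c)^2 = t^2 * (cmod \<beta>)^2"
      unfolding c_def using t0 by (simp add: norm_mult power_mult_distrib)
    ultimately have "0 \<le> t^2 * (cmod \<beta>)^2 * (l2norm s)^2 - 2 * t * (cmod \<beta>)^2"
      using m[of c] expand[of c] by simp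
    then have "0 \<le> t * (cmod \<beta>)^2 * (t * (l2norm s)^2 - 2)"
      by (simp add: algebra_simps power2_eq_square)
    moreover have "t * (cmod \<beta>)^2 > 0" using t0 nz by simp
    ultimately have "0 \<le> t * (l2norm s)^2 - 2"
      by (simp add: zero_le_mult_iff)
    with ts show False by simp
  qed
  then show ?thesis using li_commute[OF s h] \<beta>_def by simp
qed

lemma proj:
  assumes S: "S \<subseteq> l2" and lin: "\<And>x y a b. x \<in> S \<Longrightarrow> y \<in> S \<Longrightarrow> sc a x + sc b y \<in> S"
    and ne: "S \<noteq> {}" and a: "a \<in> l2" and e0: "e0 > 0" and far: "\<And>s. s \<in> S \<Longrightarrow> e0 \<le> l2norm (a - s)"
  shows "\<exists>h\<in>l2. h \<noteq> 0 \<and> (\<forall>s\<in>S. l2inner s h = 0)"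
proof -
  define D where "D = (\<lambda>s. (l2norm (a - s))^2) ` S"
  define \<delta> where "\<delta> = Inf D"
  have Dne: "D \<noteq> {}" using ne by (simp add: D_def)
  have Dbdd: "bdd_below D" unfolding D_def by (rule bdd_belowI[of _ 0]) auto
  have low: "\<delta> \<le> (l2norm (a - s))^2" if "s \<in> S" for s
    unfolding \<delta>_def by (rule cInf_lower[OF _ Dbdd]) (use that in \<open>simp add: D_def\<close>)
  have dpos: "e0^2 \<le> \<delta>" unfolding \<delta>_def
  proof (rule cInf_greatest[OF Dne])
    fix d assume "d \<in> D"
    then obtain s where s: "s \<in> S" "d = (l2norm (a - s))^2" by (auto simp: D_def)
    show "e0^2 \<le> d" unfolding s(2) by (rule power_mono[OF far[OF s(1)]]) (use e0 in simp)
  qed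
  have "\<forall>k. \<exists>s. s \<in> S \<and> (l2norm (a - s))^2 < \<delta> + 1 / real (Suc k)"
  proof
    fix k
    have "Inf D < \<delta> + 1 / real (Suc k)" by (simp add: \<delta>_def)
    then obtain d where "d \<in> D" "d < \<delta> + 1 / real (Suc k)" using cInf_lessD[OF Dne] by blast
    then show "\<exists>s. s \<in> S \<and> (l2norm (a - s))^2 < \<delta> + 1 / real (Suc k)" by (auto simp: D_def)
  qed
  then obtain u where uS: "\<And>k. u k \<in> S" and ud: "\<And>k. (l2norm (a - u k))^2 < \<delta> + 1 / real (Suc k)"
    by metis
  have ul: "u k \<in> l2" for k using uS S by blast
  have cb: "(l2norm (u m - u n))^2 \<le> 2 / real (Suc m) + 2 / real (Suc n)" for m n
  proof -
    define x where "x = a - u m"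
    define y where "y = a - u n"
    have xl: "x \<in> l2" and yl: "y \<in> l2" using a ul by (auto simp: x_def y_def)
    define mid where "mid = sc (1/2) (u m) + sc (1/2) (u n)"
    have midS: "mid \<in> S" unfolding mid_def by (rule lin[OF uS uS])
    have midl: "mid \<in> l2" using midS S by blast
    have xy: "x + y = sc 2 (a - mid)" by (auto simp: x_def y_def mid_def sc_def algebra_simps)
    have "(l2norm (x + y))^2 = 4 * (l2norm (a - mid))^2"
      unfolding xy using a midl by (simp add: l2norm_sc power_mult_distrib)
    also have "\<dots> \<ge> 4 * \<delta>" using low[OF midS] by simp
    finally have s1: "4 * \<delta> \<le> (l2norm (x + y))^2" .
    have xmy: "x - y = u n - u m" by (simp add: x_def y_def)
    have "(l2norm (u m - u n))^2 = (l2norm (x - y))^2"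
      unfolding xmy using l2norm_commute[OF ul ul, of m n] by simp
    also have "\<dots> = 2 * (l2norm x)^2 + 2 * (l2norm y)^2 - (l2norm (x + y))^2"
      using l2norm_parallelogram[OF xl yl] by simp
    also have "\<dots> \<le> 2 * (\<delta> + 1 / real (Suc m)) + 2 * (\<delta> + 1 / real (Suc n)) - 4 * \<delta>"
      using ud[of m] ud[of n] s1 unfolding x_def y_def by simp
    finally show ?thesis by simp
  qed
  have "\<exists>v\<in>l2. l2lim u v"
  proof (rule l2_complete[OF ul])
    fix e :: real assume e: "e > 0"
    obtain N where N: "4 / e^2 < real N" using reals_Archimedean2 by blast
    have "l2norm (u m - u n) < e" if "m \<ge> N" "n \<ge> N" for m n
    proof -
      have e2: "e^2 > 0" using e by simp
      have "2 / real (Suc m) \<le> 2 / real (Suc N)" using that by (simp add: frac_le)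
      moreover have "2 / real (Suc n) \<le> 2 / real (Suc N)" using that by (simp add: frac_le)
      moreover have "4 / real (Suc N) < e^2"
      proof -
        have "4 < e^2 * real N" using N e2 by (simp add: field_simps)
        also have "\<dots> < e^2 * real (Suc N)" using e2 by simp
        finally show ?thesis by (simp add: field_simps)
      qed
      ultimately have "(l2norm (u m - u n))^2 < e^2" using cb[of m n] by linarith
      then show ?thesis using e by (simp add: power_less_imp_less_base)
    qed
    then show "\<exists>N. \<forall>m\<ge>N. \<forall>n\<ge>N. l2norm (u m - u n) < e" by blast
  qed
  then obtain v where v: "v \<in> l2" and lv: "l2lim u v" by blast
  define h where "h = a - v"
  have hl: "h \<in> l2" using a v by (simp add: h_def)
  have ln: "(\<lambda>k. (l2norm (a - u k))^2) \<longlonglongrightarrow> (l2norm h)^2"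
    unfolding h_def by (intro tendsto_power lim_norm[OF ul v a lv])
  have hup: "(l2norm h)^2 \<le> \<delta>"
  proof (rule LIMSEQ_le[OF ln])
    show "(\<lambda>k. \<delta> + 1 / real (Suc k)) \<longlonglongrightarrow> \<delta>"
      using tendsto_add[OF tendsto_const[of \<delta>] LIMSEQ_inverse_real_of_nat] by (simp add: inverse_eq_divide)
    show "\<exists>N. \<forall>n\<ge>N. (l2norm (a - u n))^2 \<le> \<delta> + 1 / real (Suc n)" using ud less_imp_le by blast
  qed
  have hlow: "\<delta> \<le> (l2norm h)^2"
    by (rule LIMSEQ_le_const[OF ln]) (use low uS in blast)
  have hnz: "h \<noteq> 0"
  proof
    assume "h = 0"
    then have "(l2norm h)^2 = 0" by simp
    then show False using hlow dpos e0 by (smt (verit) zero_less_power)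
  qed
  have orth: "l2inner s h = 0" if s: "s \<in> S" for s
  proof (rule orth_from_min[OF hl])
    show sl: "s \<in> l2" using s S by blast
    fix c
    have inS: "u k + sc (-c) s \<in> S" for k
      using lin[OF uS[of k] s, of 1 "-c"] by (simp add: sc_def)
    have l3: "l2lim (\<lambda>k. u k + sc (-c) s) (v + sc (-c) s)"
      by (rule lim_add[OF ul _ v _ lv lim_const]) (use sl in simp_all)
    have lnn: "(\<lambda>k. (l2norm (a - (u k + sc (-c) s)))^2) \<longlonglongrightarrow> (l2norm (a - (v + sc (-c) s)))^2"
      by (intro tendsto_power lim_norm[OF _ _ a l3]) (use ul sl v in simp_all)
    have "\<delta> \<le> (l2norm (a - (v + sc (-c) s)))^2"
      by (rule LIMSEQ_le_const[OF lnn]) (use low inS in blast)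
    moreover have "a - (v + sc (-c) s) = h + sc c s" by (auto simp: h_def sc_def)
    ultimately show "(l2norm h)^2 \<le> (l2norm (h + sc c s))^2" using hup by simp
  qed
  show ?thesis using hl hnz orth by blast
qed


lemma sc_sumf: "sc a (\<Sum>n\<in>F. w n) = (\<Sum>n\<in>F. sc a (w n))"
  by (rule ext) (simp add: sum_fun_apply sum_distrib_left)

lemma li_sumf_left: "(\<And>n. n \<in> F \<Longrightarrow> w n \<in> l2) \<Longrightarrow> h \<in> l2 \<Longrightarrow>
   l2inner (\<Sum>n\<in>F. w n) h = (\<Sum>n\<in>F. l2inner (w n) h)"
proof (induction F rule: infinite_finite_induct)
  case (insert a F)
  have "l2inner (\<Sum>n\<in>insert a F. w n) h = l2inner (w a + (\<Sum>n\<in>F. w n)) h"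
    by (rule arg_cong[where f="\<lambda>v. l2inner v h"]) (rule sum.insert[OF insert(1,2)])
  also have "\<dots> = l2inner (w a) h + l2inner (\<Sum>n\<in>F. w n) h"
    using insert by (intro li_add_left l2_sumf) auto
  also have "\<dots> = l2inner (w a) h + (\<Sum>n\<in>F. l2inner (w n) h)" using insert by simp
  also have "\<dots> = (\<Sum>n\<in>insert a F. l2inner (w n) h)" by (rule sum.insert[OF insert(1,2), symmetric])
  finally show ?case .
qed (auto simp: zero_fun_def)

lemma geo:
  assumes B: "is_contraction B" and e: "e \<in> l2" and t0: "0 \<le> t" and t1: "t < 1"
  shows "\<exists>z\<in>l2. z = e + sc (complex_of_real t) (B z) \<and>
     (\<forall>h\<in>l2. (\<lambda>n. complex_of_real (t^n) * l2inner ((B^^n) e) h) sums l2inner z h)"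
proof -
  define v where "v n = sc (complex_of_real (t^n)) ((B^^n) e)" for n
  have Bn: "(B^^n) e \<in> l2" for n by (rule contr_l2[OF contr_pow[OF B] e])
  have vl: "v n \<in> l2" for n unfolding v_def using Bn by simp
  have vn: "l2norm (v n) \<le> l2norm e * t^n" for n
  proof -
    have "l2norm (v n) = t^n * l2norm ((B^^n) e)" unfolding v_def using Bn t0 by (simp add: l2norm_sc norm_power)
    also have "\<dots> \<le> t^n * l2norm e" by (rule mult_left_mono[OF contr_norm[OF contr_pow[OF B] e]]) (use t0 in simp)
    finally show ?thesis by (simp add: mult.commute)
  qed
  have sv: "summable (\<lambda>n. l2norm (v n))"
  proof (rule summable_comparison_test')
    show "summable (\<lambda>n. l2norm e * t^n)" using t0 t1 by (intro summable_mult summable_geometric) simp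
    show "norm (l2norm (v n)) \<le> l2norm e * t^n" for n using vn[of n] vl[of n] by simp
  qed
  obtain z where z: "z \<in> l2" and lz: "l2lim (\<lambda>N. \<Sum>n<N. v n) z" using l2_series[OF vl sv] by blast
  define P where "P N = (\<Sum>n<N. v n)" for N
  have Pl: "P N \<in> l2" for N unfolding P_def using vl by (simp add: l2_sumf)
  have lz': "l2lim P z" using lz by (simp add: P_def[abs_def])
  have rec: "P (Suc N) = e + sc (complex_of_real t) (B (P N))" for N
  proof -
    have "P (Suc N) = v 0 + (\<Sum>n<N. v (Suc n))" unfolding P_def by (rule sum.lessThan_Suc_shift)
    moreover have "v 0 = e" by (simp add: v_def sc_def)
    moreover have "B (P N) = (\<Sum>n<N. B (v n))" unfolding P_def by (rule contr_sumf[OF B vl])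
    moreover have "sc (complex_of_real t) (B (v n)) = v (Suc n)" for n
      unfolding v_def using contr_sc[OF B Bn] by (auto simp: sc_def)
    ultimately show ?thesis by (simp add: sc_sumf)
  qed
  have l1: "l2lim (\<lambda>N. P (Suc N)) z" by (rule lim_shift[OF lz'])
  have l2: "l2lim (\<lambda>N. P (Suc N)) (e + sc (complex_of_real t) (B z))"
  proof -
    have a: "l2lim (\<lambda>N. B (P N)) (B z)" by (rule lim_contr[OF B Pl z lz'])
    have b: "l2lim (\<lambda>N. sc (complex_of_real t) (B (P N))) (sc (complex_of_real t) (B z))"
      by (rule lim_sc[OF _ _ a]) (use contr_l2[OF B] Pl z in auto)
    have c: "l2lim (\<lambda>N. e + sc (complex_of_real t) (B (P N))) (e + sc (complex_of_real t) (B z))"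
      by (rule lim_add[OF _ _ e _ lim_const b]) (use contr_l2[OF B] Pl z e in auto)
    show ?thesis unfolding rec by (rule c)
  qed
  have zeq: "z = e + sc (complex_of_real t) (B z)"
    by (rule lim_unique[OF Pl z _ l1 l2]) (use contr_l2[OF B z] e in simp)
  have "(\<lambda>n. complex_of_real (t^n) * l2inner ((B^^n) e) h) sums l2inner z h" if h: "h \<in> l2" for h
  proof -
    have "(\<lambda>N. l2inner (P N) h) \<longlonglongrightarrow> l2inner z h" by (rule lim_inner[OF Pl z h lz'])
    moreover have "l2inner (P N) h = (\<Sum>n<N. complex_of_real (t^n) * l2inner ((B^^n) e) h)" for N
      unfolding P_def using li_sumf_left[of "{..<N}" v h] vl h Bn
      by (simp add: v_def li_sc_left)
    ultimately show ?thesis unfolding sums_def by simp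
  qed
  with z zeq show ?thesis by blast
qed

lemma coeff_zero:
  fixes c :: "nat \<Rightarrow> complex"
  assumes bnd: "\<And>n. cmod (c n) \<le> M"
    and z: "\<And>t. 0 < t \<Longrightarrow> t < 1 \<Longrightarrow> (\<lambda>n. complex_of_real (t^n) * c n) sums 0"
  shows "c n = 0"
proof (induction n rule: less_induct)
  case (less n)
  have M0: "0 \<le> M" using bnd[of 0] norm_ge_zero order_trans by blast
  have bound: "cmod (c n) \<le> 2 * M * t" if t: "0 < t" "t \<le> 1/2" for t
  proof -
    have t1: "t < 1" using t by simp
    have s1: "(\<lambda>k. complex_of_real (t^(k+n)) * c (k+n)) sums 0"
      using sums_split_initial_segment[OF z[OF t(1) t1], of n] less by simp
    have s2: "(\<lambda>k. complex_of_real (t^k) * c (k+n)) sums 0"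
    proof -
      have eq: "(\<lambda>k. inverse (complex_of_real (t^n)) * (complex_of_real (t^(k+n)) * c (k+n))) = (\<lambda>k. complex_of_real (t^k) * c (k+n))"
        by (rule ext) (use t in \<open>simp add: power_add field_simps\<close>)
      show ?thesis using sums_mult[OF s1, of "inverse (complex_of_real (t^n))"] unfolding eq by simp
    qed
    have s3: "(\<lambda>k. complex_of_real (t^(k+1)) * c (k+1+n)) sums (- c n)"
      using sums_split_initial_segment[OF s2, of 1] by simp
    have "cmod (- c n) \<le> (\<Sum>k. M * t * t^k)"
    proof -
      have "cmod (- c n) = cmod (\<Sum>k. complex_of_real (t^(k+1)) * c (k+1+n))" using s3 by (simp add: sums_iff)
      also have "\<dots> \<le> (\<Sum>k. M * t * t^k)"
      proof (rule norm_suminf_le)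
        show "norm (complex_of_real (t^(k+1)) * c (k+1+n)) \<le> M * t * t^k" for k
        proof -
          have "norm (complex_of_real (t^(k+1)) * c (k+1+n)) = t^(k+1) * cmod (c (k+1+n))"
            using t by (simp add: norm_mult norm_power)
          also have "\<dots> \<le> t^(k+1) * M" by (rule mult_left_mono[OF bnd]) (use t in simp)
          finally show ?thesis by (simp add: algebra_simps)
        qed
        show "summable (\<lambda>k. M * t * t^k)" using t t1 by (intro summable_mult summable_geometric) simp
      qed
      finally show ?thesis .
    qed
    also have "(\<Sum>k. M * t * t^k) = M * t / (1 - t)"
      using t t1 by (simp add: suminf_mult suminf_geometric)
    also have "\<dots> \<le> 2 * M * t"
    proof -
      have "1 - t \<ge> 1/2" using t by simp
      then have "M * t / (1 - t) \<le> M * t / (1/2)"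
        using M0 t by (intro divide_left_mono) auto
      then show ?thesis by simp
    qed
    finally show ?thesis by simp
  qed
  show "c n = 0"
  proof (rule ccontr)
    assume nz: "c n \<noteq> 0"
    define t where "t = min (1/2) (cmod (c n) / (4 * M + 1))"
    have tp: "0 < t" using nz M0 by (simp add: t_def)
    have th: "t \<le> 1/2" unfolding t_def by (rule min.cobounded1)
    have "2 * M * t \<le> 2 * M * (cmod (c n) / (4 * M + 1))"
      using M0 by (intro mult_left_mono) (auto simp: t_def)
    also have "\<dots> < cmod (c n)"
    proof -
      have "2 * M < 4 * M + 1" using M0 by simp
      then have "2 * M * cmod (c n) < (4 * M + 1) * cmod (c n)" using nz by simp
      then show ?thesis using M0 by (simp add: field_simps)
    qed
    finally show False using bound[OF tp th] by simp
  qed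
qed


lemma kspan_zero: "((\<lambda>n. 0), (\<lambda>n. 0)) \<in> kspan X"
  unfolding kspan_def by (auto intro!: exI[of _ "{}"])

lemma kspan_single: "x \<in> X \<Longrightarrow> x \<in> kspan X"
  unfolding kspan_def by (auto intro!: exI[of _ "{x}"] exI[of _ "\<lambda>_. 1"])

lemma kspan_lc:
  assumes p: "p \<in> kspan X" and q: "q \<in> kspan X"
  shows "((\<lambda>n. a * fst p n + b * fst q n), (\<lambda>n. a * snd p n + b * snd q n)) \<in> kspan X"
proof -
  obtain F1 c1 where F1: "finite F1" "F1 \<subseteq> X"
    and p1: "p = ((\<lambda>n. \<Sum>x\<in>F1. c1 x * fst x n), (\<lambda>n. \<Sum>x\<in>F1. c1 x * snd x n))"
    using p unfolding kspan_def by blast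
  obtain F2 c2 where F2: "finite F2" "F2 \<subseteq> X"
    and q2: "q = ((\<lambda>n. \<Sum>x\<in>F2. c2 x * fst x n), (\<lambda>n. \<Sum>x\<in>F2. c2 x * snd x n))"
    using q unfolding kspan_def by blast
  define F where "F = F1 \<union> F2"
  define c where "c x = a * (if x \<in> F1 then c1 x else 0) + b * (if x \<in> F2 then c2 x else 0)" for x
  have fin: "finite F" using F1 F2 by (simp add: F_def)
  have gen: "(\<Sum>x\<in>F. c x * g x) = a * (\<Sum>x\<in>F1. c1 x * g x) + b * (\<Sum>x\<in>F2. c2 x * g x)"
    for g :: "kvec \<Rightarrow> complex"
  proof -
    have "(\<Sum>x\<in>F. c x * g x) = (\<Sum>x\<in>F. a * (if x \<in> F1 then c1 x * g x else 0) + b * (if x \<in> F2 then c2 x * g x else 0))"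
      by (rule sum.cong) (auto simp: c_def algebra_simps)
    also have "\<dots> = a * (\<Sum>x\<in>F. (if x \<in> F1 then c1 x * g x else 0)) + b * (\<Sum>x\<in>F. (if x \<in> F2 then c2 x * g x else 0))"
      by (simp add: sum.distrib sum_distrib_left)
    also have "(\<Sum>x\<in>F. (if x \<in> F1 then c1 x * g x else 0)) = (\<Sum>x\<in>F1. c1 x * g x)"
    proof -
      have "F \<inter> F1 = F1" by (auto simp: F_def)
      then show ?thesis using sum.inter_restrict[OF fin, of "\<lambda>x. c1 x * g x" F1] by simp
    qed
    also have "(\<Sum>x\<in>F. (if x \<in> F2 then c2 x * g x else 0)) = (\<Sum>x\<in>F2. c2 x * g x)"
    proof -
      have "F \<inter> F2 = F2" by (auto simp: F_def)
      then show ?thesis using sum.inter_restrict[OF fin, of "\<lambda>x. c2 x * g x" F2] by simp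
    qed
    finally show ?thesis .
  qed
  have "((\<lambda>n. a * fst p n + b * fst q n), (\<lambda>n. a * snd p n + b * snd q n)) =
        ((\<lambda>n. \<Sum>x\<in>F. c x * fst x n), (\<lambda>n. \<Sum>x\<in>F. c x * snd x n))"
    by (simp add: gen p1 q2)
  moreover have "F \<subseteq> X" using F1 F2 by (simp add: F_def)
  ultimately show ?thesis unfolding kspan_def using fin by blast
qed

lemma kspan_sorth:
  assumes X: "X \<subseteq> sorth Y" and Y: "Y \<subseteq> kspace"
  shows "kspan X \<subseteq> sorth Y"
proof
  fix v assume "v \<in> kspan X"
  then obtain F c where F: "finite F" "F \<subseteq> X"
    and v: "v = ((\<lambda>n. \<Sum>x\<in>F. c x * fst x n), (\<lambda>n. \<Sum>x\<in>F. c x * snd x n))"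
    unfolding kspan_def by blast
  have Fk: "\<forall>a\<in>F. fst a \<in> l2 \<and> snd a \<in> l2" using F X by (auto simp: sorth_def kspace_def)
  have Fo: "\<forall>a\<in>F. \<forall>b\<in>Y. kform a b = 0" using F X by (auto simp: sorth_def)
  have l1: "(\<lambda>n. \<Sum>x\<in>F. c x * fst x n) \<in> l2" using l2_sum[OF F(1), of fst c] Fk by auto
  have l2': "(\<lambda>n. \<Sum>x\<in>F. c x * snd x n) \<in> l2" using l2_sum[OF F(1), of snd c] Fk by auto
  have "kform v b = 0" if b: "b \<in> Y" for b
  proof -
    have bl: "fst b \<in> l2" "snd b \<in> l2" using b Y by (auto simp: kspace_def)
    have "kform v b = \<i> * (\<Sum>x\<in>F. c x * l2inner (fst x) (fst b)) - \<i> * (\<Sum>x\<in>F. c x * l2inner (snd x) (snd b))"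
      unfolding v kform_def using li_sum_left[OF F(1), of fst "fst b" c] li_sum_left[OF F(1), of snd "snd b" c] Fk bl
      by simp
    also have "\<dots> = (\<Sum>x\<in>F. c x * kform x b)"
      by (simp add: kform_def sum_distrib_left sum_subtractf algebra_simps)
    also have "\<dots> = 0" using Fo b by simp
    finally show ?thesis .
  qed
  then show "v \<in> sorth Y" unfolding sorth_def kspace_def using l1 l2' v by simp
qed

lemma AT_kspace: "is_contraction T \<Longrightarrow> AT T \<subseteq> kspace"
  by (auto simp: AT_def KK_def kspace_def contr_l2)

lemma NN_sorth: "is_contraction T \<Longrightarrow> NN T \<subseteq> sorth (AT T)"
  unfolding NN_def by (rule kspan_sorth[OF _ AT_kspace]) (auto simp: Nplus_def Nminus_def)

lemma pow_adj_gen: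
  assumes B: "is_contraction B" and B': "is_contraction B'"
    and r: "\<And>x y. x \<in> l2 \<Longrightarrow> y \<in> l2 \<Longrightarrow> l2inner (B x) y = l2inner x (B' y)"
  shows "x \<in> l2 \<Longrightarrow> y \<in> l2 \<Longrightarrow> l2inner ((B^^n) x) y = l2inner x ((B'^^n) y)"
proof (induction n arbitrary: y)
  case 0 then show ?case by simp
next
  case (Suc n)
  have "l2inner ((B^^Suc n) x) y = l2inner (B ((B^^n) x)) y" by simp
  also have "\<dots> = l2inner ((B^^n) x) (B' y)" by (rule r[OF contr_l2[OF contr_pow[OF B] Suc.prems(1)] Suc.prems(2)])
  also have "\<dots> = l2inner x ((B'^^n) (B' y))" by (rule Suc.IH[OF Suc.prems(1) contr_l2[OF B' Suc.prems(2)]])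
  also have "\<dots> = l2inner x ((B'^^Suc n) y)" by (simp add: funpow_swap1)
  finally show ?case .
qed

lemma unitary_zero:
  assumes T: "is_contraction T" and c: "cnu T" and h: "h \<in> l2"
    and hU1: "\<And>n. Defs.adjoint T (T ((T^^n) h)) = (T^^n) h"
    and hU2: "\<And>n. T (Defs.adjoint T ((Defs.adjoint T ^^ n) h)) = (Defs.adjoint T ^^ n) h"
  shows "h = 0"
proof (rule ccontr)
  assume hnz: "h \<noteq> 0"
  define A where "A = Defs.adjoint T"
  have Ac: "is_contraction A" using adj_contr[OF T] by (simp add: A_def)
  define U where "U = {x \<in> l2. \<forall>n. A (T ((T^^n) x)) = (T^^n) x \<and> T (A ((A^^n) x)) = (A^^n) x}"
  have hU: "h \<in> U" using h hU1 hU2 by (simp add: U_def A_def)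
  have TnC: "is_contraction (T^^n)" for n by (rule contr_pow[OF T])
  have AnC: "is_contraction (A^^n)" for n by (rule contr_pow[OF Ac])
  have Ul: "x \<in> U \<Longrightarrow> x \<in> l2" for x by (simp add: U_def)
  have U1: "x \<in> U \<Longrightarrow> A (T ((T^^n) x)) = (T^^n) x" for x n by (simp add: U_def)
  have U2: "x \<in> U \<Longrightarrow> T (A ((A^^n) x)) = (A^^n) x" for x n by (simp add: U_def)
  have Tl: "x \<in> l2 \<Longrightarrow> T x \<in> l2" for x by (rule contr_l2[OF T])
  have Al: "x \<in> l2 \<Longrightarrow> A x \<in> l2" for x by (rule contr_l2[OF Ac])
  have Tnl: "x \<in> l2 \<Longrightarrow> (T^^n) x \<in> l2" for x n by (rule contr_l2[OF TnC])
  have Anl: "x \<in> l2 \<Longrightarrow> (A^^n) x \<in> l2" for x n by (rule contr_l2[OF AnC])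
  have zU: "0 \<in> U"
    unfolding U_def using contr_zero[OF T] contr_zero[OF Ac] contr_zero[OF TnC] contr_zero[OF AnC] by simp
  have cs: "Defs.closed_subspace U"
    unfolding Defs.closed_subspace_def
  proof (intro conjI allI impI ballI)
    show "U \<subseteq> l2" by (auto simp: U_def)
    show "(\<lambda>n. 0) \<in> U" using zU by (simp add: zero_fun_def)
  next
    fix x y a b assume x: "x \<in> U" and y: "y \<in> U"
    have xl: "x \<in> l2" and yl: "y \<in> l2" using x y by (auto simp: U_def)
    have "A (T ((T^^n) (\<lambda>k. a * x k + b * y k))) = (T^^n) (\<lambda>k. a * x k + b * y k)" for n
    proof -
      have "(T^^n) (\<lambda>k. a * x k + b * y k) = (\<lambda>k. a * (T^^n) x k + b * (T^^n) y k)"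
        by (rule contr_lc[OF TnC xl yl])
      moreover have "T (\<lambda>k. a * (T^^n) x k + b * (T^^n) y k) = (\<lambda>k. a * T ((T^^n) x) k + b * T ((T^^n) y) k)"
        by (rule contr_lc[OF T Tnl[OF xl] Tnl[OF yl]])
      moreover have "A (\<lambda>k. a * T ((T^^n) x) k + b * T ((T^^n) y) k) = (\<lambda>k. a * A (T ((T^^n) x)) k + b * A (T ((T^^n) y)) k)"
        by (rule contr_lc[OF Ac Tl[OF Tnl[OF xl]] Tl[OF Tnl[OF yl]]])
      ultimately show ?thesis using U1[OF x] U1[OF y] by simp
    qed
    moreover have "T (A ((A^^n) (\<lambda>k. a * x k + b * y k))) = (A^^n) (\<lambda>k. a * x k + b * y k)" for n
    proof -
      have "(A^^n) (\<lambda>k. a * x k + b * y k) = (\<lambda>k. a * (A^^n) x k + b * (A^^n) y k)"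
        by (rule contr_lc[OF AnC xl yl])
      moreover have "A (\<lambda>k. a * (A^^n) x k + b * (A^^n) y k) = (\<lambda>k. a * A ((A^^n) x) k + b * A ((A^^n) y) k)"
        by (rule contr_lc[OF Ac Anl[OF xl] Anl[OF yl]])
      moreover have "T (\<lambda>k. a * A ((A^^n) x) k + b * A ((A^^n) y) k) = (\<lambda>k. a * T (A ((A^^n) x)) k + b * T (A ((A^^n) y)) k)"
        by (rule contr_lc[OF T Al[OF Anl[OF xl]] Al[OF Anl[OF yl]]])
      ultimately show ?thesis using U2[OF x] U2[OF y] by simp
    qed
    moreover have "(\<lambda>k. a * x k + b * y k) \<in> l2" using xl yl by simp
    ultimately show "(\<lambda>n. a * x n + b * y n) \<in> U" unfolding U_def by blast
  next
    fix u x assume as: "(\<forall>k. u k \<in> U) \<and> x \<in> l2 \<and> (\<lambda>k. l2norm (\<lambda>n. u k n - x n)) \<longlonglongrightarrow> 0"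
    have uU: "u k \<in> U" for k using as by blast
    have ul: "u k \<in> l2" for k using uU[of k] by (simp add: U_def)
    have xl: "x \<in> l2" using as by blast
    have lim: "l2lim u x" unfolding l2lim_def using as by (simp add: fun_diff_def)
    have "A (T ((T^^n) x)) = (T^^n) x" for n
    proof -
      have C: "is_contraction (A \<circ> T \<circ> (T^^n))" by (intro contr_comp Ac T TnC)
      have l1: "l2lim (\<lambda>k. (A \<circ> T \<circ> (T^^n)) (u k)) ((A \<circ> T \<circ> (T^^n)) x)"
        by (rule lim_contr[OF C ul xl lim])
      have l2: "l2lim (\<lambda>k. (T^^n) (u k)) ((T^^n) x)" by (rule lim_contr[OF TnC ul xl lim])
      have e: "(A \<circ> T \<circ> (T^^n)) (u k) = (T^^n) (u k)" for k using U1[OF uU[of k]] by simp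
      have "(A \<circ> T \<circ> (T^^n)) x = (T^^n) x"
        by (rule lim_unique[OF _ contr_l2[OF C xl] Tnl[OF xl] _ l2]) (use l1 e Tnl ul in simp_all)
      then show ?thesis by simp
    qed
    moreover have "T (A ((A^^n) x)) = (A^^n) x" for n
    proof -
      have C: "is_contraction (T \<circ> A \<circ> (A^^n))" by (intro contr_comp Ac T AnC)
      have l1: "l2lim (\<lambda>k. (T \<circ> A \<circ> (A^^n)) (u k)) ((T \<circ> A \<circ> (A^^n)) x)"
        by (rule lim_contr[OF C ul xl lim])
      have l2: "l2lim (\<lambda>k. (A^^n) (u k)) ((A^^n) x)" by (rule lim_contr[OF AnC ul xl lim])
      have e: "(T \<circ> A \<circ> (A^^n)) (u k) = (A^^n) (u k)" for k using U2[OF uU[of k]] by simp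
      have "(T \<circ> A \<circ> (A^^n)) x = (A^^n) x"
        by (rule lim_unique[OF _ contr_l2[OF C xl] Anl[OF xl] _ l2]) (use l1 e Anl ul in simp_all)
      then show ?thesis by simp
    qed
    ultimately show "x \<in> U" unfolding U_def using xl by blast
  qed
  have TU: "T ` U = U"
  proof
    show "T ` U \<subseteq> U"
    proof
      fix y assume "y \<in> T ` U"
      then obtain x where x: "x \<in> U" and y: "y = T x" by blast
      have xl: "x \<in> l2" by (rule Ul[OF x])
      have "A (T ((T^^n) (T x))) = (T^^n) (T x)" for n
        using U1[OF x, of "Suc n"] by (simp add: funpow_swap1)
      moreover have "T (A ((A^^n) (T x))) = (A^^n) (T x)" for n
      proof (cases n)
        case 0 then show ?thesis using U1[OF x, of 0] by simp
      next
        case (Suc m)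
        have "(A^^n) (T x) = (A^^m) x" using U1[OF x, of 0] by (simp add: Suc funpow_swap1)
        then show ?thesis using U2[OF x, of m] by simp
      qed
      ultimately show "y \<in> U" unfolding U_def y using Tl[OF xl] by blast
    qed
    show "U \<subseteq> T ` U"
    proof
      fix x assume x: "x \<in> U"
      have xl: "x \<in> l2" by (rule Ul[OF x])
      have "A (T ((T^^n) (A x))) = (T^^n) (A x)" for n
      proof (cases n)
        case 0 then show ?thesis using U2[OF x, of 0] by simp
      next
        case (Suc m)
        have "(T^^n) (A x) = (T^^m) x" using U2[OF x, of 0] by (simp add: Suc funpow_swap1)
        then show ?thesis using U1[OF x, of m] by simp
      qed
      moreover have "T (A ((A^^n) (A x))) = (A^^n) (A x)" for n
        using U2[OF x, of "Suc n"] by (simp add: funpow_swap1)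
      ultimately have "A x \<in> U" unfolding U_def using Al[OF xl] by blast
      moreover have "x = T (A x)" using U2[OF x, of 0] by simp
      ultimately show "x \<in> T ` U" by blast
    qed
  qed
  have iso: "\<forall>x\<in>U. l2norm (T x) = l2norm x"
  proof
    fix x assume x: "x \<in> U"
    have xl: "x \<in> l2" by (rule Ul[OF x])
    have "complex_of_real ((l2norm (T x))^2) = l2inner (T x) (T x)" by (simp add: li_self[OF Tl[OF xl]])
    also have "\<dots> = l2inner x (A (T x))" unfolding A_def by (rule adj_inner[OF T xl Tl[OF xl]])
    also have "\<dots> = l2inner x x" using U1[OF x, of 0] by simp
    also have "\<dots> = complex_of_real ((l2norm x)^2)" by (rule li_self[OF xl])
    finally have "(l2norm (T x))^2 = (l2norm x)^2" by (simp only: of_real_eq_iff)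
    then show "l2norm (T x) = l2norm x" using xl Tl[OF xl] by (simp add: power2_eq_iff_nonneg)
  qed
  have ne: "U \<noteq> {\<lambda>n. 0}"
  proof
    assume "U = {\<lambda>n. 0}"
    then have "h = (\<lambda>n. 0)" using hU by blast
    then show False using hnz by (simp add: zero_fun_def)
  qed
  show False using c cs TU iso ne unfolding cnu_def by blast
qed


lemma selfadj1:
  assumes T: "is_contraction T" and w: "w \<in> l2" and u: "u \<in> l2"
  shows "l2inner (w - Defs.adjoint T (T w)) u = l2inner w (u - Defs.adjoint T (T u))"
proof -
  let ?A = "Defs.adjoint T"
  have Ac: "is_contraction ?A" by (rule adj_contr[OF T])
  have "l2inner (?A (T w)) u = l2inner (T w) (T u)" by (rule adj_inner2[OF T contr_l2[OF T w] u])
  also have "\<dots> = l2inner w (?A (T u))" by (rule adj_inner[OF T w contr_l2[OF T u]])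
  finally have e: "l2inner (?A (T w)) u = l2inner w (?A (T u))" .
  show ?thesis
    using e w u contr_l2[OF Ac contr_l2[OF T w]] contr_l2[OF Ac contr_l2[OF T u]]
    by (simp add: li_diff_left li_diff_right)
qed

lemma selfadj2:
  assumes T: "is_contraction T" and w: "w \<in> l2" and u: "u \<in> l2"
  shows "l2inner (w - T (Defs.adjoint T w)) u = l2inner w (u - T (Defs.adjoint T u))"
proof -
  let ?A = "Defs.adjoint T"
  have Ac: "is_contraction ?A" by (rule adj_contr[OF T])
  have "l2inner (T (?A w)) u = l2inner (?A w) (?A u)" by (rule adj_inner[OF T contr_l2[OF Ac w] u])
  also have "\<dots> = l2inner w (T (?A u))" by (rule adj_inner2[OF T w contr_l2[OF Ac u]])
  finally have e: "l2inner (T (?A w)) u = l2inner w (T (?A u))" .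
  show ?thesis
    using e w u contr_l2[OF T contr_l2[OF Ac w]] contr_l2[OF T contr_l2[OF Ac u]]
    by (simp add: li_diff_left li_diff_right)
qed

lemma kill: "u \<in> l2 \<Longrightarrow> (\<And>w. w \<in> l2 \<Longrightarrow> l2inner w u = 0) \<Longrightarrow> u = 0"
proof -
  assume u: "u \<in> l2" and h: "\<And>w. w \<in> l2 \<Longrightarrow> l2inner w u = 0"
  have "complex_of_real ((l2norm u)^2) = 0" using h[OF u] li_self[OF u] by simp
  then have "l2norm u = 0" by simp
  then show "u = 0" by (rule l2norm_eq_0[OF u])
qed

lemma Nplus_elem:
  assumes T: "is_contraction T" and w: "w \<in> l2" and x: "x \<in> l2"
    and xe: "x = (w - Defs.adjoint T (T w)) + sc l (Defs.adjoint T x)"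
  shows "(x, sc l x) \<in> Nplus T l"
proof -
  let ?A = "Defs.adjoint T"
  have Ac: "is_contraction ?A" by (rule adj_contr[OF T])
  define d where "d = w - ?A (T w)"
  have dl: "d \<in> l2" unfolding d_def using w contr_l2[OF Ac contr_l2[OF T w]] by simp
  have Axl: "?A x \<in> l2" by (rule contr_l2[OF Ac x])
  have "kform (x, sc l x) b = 0" if b: "b \<in> AT T" for b
  proof -
    obtain k where k: "k \<in> KK T" and bk: "b = (k, T k)" using b by (auto simp: AT_def)
    have kl: "k \<in> l2" and kK: "?A (T k) = k" using k by (auto simp: KK_def)
    have dk: "l2inner d k = 0"
      unfolding d_def using selfadj1[OF T w kl] kK kl by simp
    have xe': "x = d + sc l (?A x)" using xe by (simp add: d_def)
    have "l2inner x k = l2inner (d + sc l (?A x)) k"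
      using xe' by (rule arg_cong[where f="\<lambda>v. l2inner v k"])
    also have "\<dots> = l2inner d k + l * l2inner (?A x) k"
      using dl Axl kl by (simp add: li_add_left li_sc_left)
    finally have "l2inner x k = l2inner d k + l * l2inner (?A x) k" .
    moreover have "l2inner (sc l x) (T k) = l * l2inner (?A x) k"
      using x kl contr_l2[OF T kl] by (simp add: li_sc_left adj_inner2[OF T x kl])
    ultimately show ?thesis unfolding bk kform_def using dk by simp
  qed
  then show ?thesis unfolding Nplus_def sorth_def kspace_def using x by auto
qed

lemma Nminus_elem:
  assumes T: "is_contraction T" and w: "w \<in> l2" and z: "z \<in> l2"
    and ze: "z = (w - T (Defs.adjoint T w)) + sc l (T z)"
  shows "(sc l z, z) \<in> Nminus T l"
proof -
  let ?A = "Defs.adjoint T"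
  have Ac: "is_contraction ?A" by (rule adj_contr[OF T])
  define e where "e = w - T (?A w)"
  have el: "e \<in> l2" unfolding e_def using w contr_l2[OF T contr_l2[OF Ac w]] by simp
  have Tzl: "T z \<in> l2" by (rule contr_l2[OF T z])
  have "kform (sc l z, z) b = 0" if b: "b \<in> AT T" for b
  proof -
    obtain k where k: "k \<in> KK T" and bk: "b = (k, T k)" using b by (auto simp: AT_def)
    have kl: "k \<in> l2" and kK: "?A (T k) = k" using k by (auto simp: KK_def)
    have Tkl: "T k \<in> l2" by (rule contr_l2[OF T kl])
    have ek: "l2inner e (T k) = 0"
    proof -
      have "l2inner (T (?A w)) (T k) = l2inner (?A w) (?A (T k))" by (rule adj_inner[OF T contr_l2[OF Ac w] Tkl])
      also have "\<dots> = l2inner (?A w) k" using kK by simp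
      also have "\<dots> = l2inner w (T k)" by (rule adj_inner2[OF T w kl])
      finally show ?thesis unfolding e_def using w Tkl contr_l2[OF T contr_l2[OF Ac w]] by (simp add: li_diff_left)
    qed
    have ze': "z = e + sc l (T z)" using ze by (simp add: e_def)
    have "l2inner z (T k) = l2inner (e + sc l (T z)) (T k)"
      using ze' by (rule arg_cong[where f="\<lambda>v. l2inner v (T k)"])
    also have "\<dots> = l2inner e (T k) + l * l2inner (T z) (T k)"
      using el Tzl Tkl by (simp add: li_add_left li_sc_left)
    also have "l2inner (T z) (T k) = l2inner z k" using adj_inner[OF T z Tkl] kK by simp
    finally have "l2inner z (T k) = l * l2inner z k" using ek by simp
    then show ?thesis unfolding bk kform_def using z kl by (simp add: li_sc_left)
  qed
  then show ?thesis unfolding Nminus_def sorth_def kspace_def using z by auto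
qed

lemma NN_plus: "p \<in> Nplus T l \<Longrightarrow> cmod l < 1 \<Longrightarrow> p \<in> NN T"
  unfolding NN_def by (rule kspan_single) blast

lemma NN_minus: "p \<in> Nminus T l \<Longrightarrow> cmod l < 1 \<Longrightarrow> p \<in> NN T"
  unfolding NN_def by (rule kspan_single) blast

lemma snd_NN_dense:
  assumes T: "is_contraction T" and c: "cnu T" and y: "y \<in> l2" and e: "e > 0"
  shows "\<exists>b\<in>NN T. l2norm (y - snd b) < e"
proof (rule ccontr)
  assume "\<not> ?thesis"
  then have far: "\<And>s. s \<in> snd ` NN T \<Longrightarrow> e \<le> l2norm (y - s)" by force
  let ?S = "snd ` NN T"
  let ?A = "Defs.adjoint T"
  have Ac: "is_contraction ?A" by (rule adj_contr[OF T])
  have Sl2: "?S \<subseteq> l2" using NN_sorth[OF T] by (auto simp: sorth_def kspace_def)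
  have lin: "sc a x + sc b y \<in> ?S" if xS: "x \<in> ?S" and yS: "y \<in> ?S" for x y a b
  proof -
    obtain p q where p: "p \<in> NN T" "x = snd p" and q: "q \<in> NN T" "y = snd q" using xS yS by blast
    have m1: "((\<lambda>n. a * fst p n + b * fst q n), (\<lambda>n. a * snd p n + b * snd q n)) \<in> NN T"
      using p q unfolding NN_def by (intro kspan_lc) auto
    have m2: "snd ((\<lambda>n. a * fst p n + b * fst q n), (\<lambda>n. a * snd p n + b * snd q n)) = sc a x + sc b y"
      unfolding p(2) q(2) snd_conv by (rule lc_eq)
    show ?thesis by (rule rev_image_eqI[where f=snd, OF m1 m2[symmetric]])
  qed
  have ne: "?S \<noteq> {}" using kspan_zero unfolding NN_def by blast
  obtain h where hl: "h \<in> l2" and hnz: "h \<noteq> 0" and ho: "\<forall>s\<in>?S. l2inner s h = 0"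
    using proj[OF Sl2 lin ne y e far] by blast
  have inS: "s \<in> ?S" if "p \<in> NN T" "s = snd p" for p s using that by blast
  have hK: "?A (T ((T^^n) h)) = (T^^n) h" for n
  proof -
    have coef: "l2inner ((?A^^n) (w - ?A (T w))) h = 0" if w: "w \<in> l2" for w
    proof -
      define d where "d = w - ?A (T w)"
      have dl: "d \<in> l2" unfolding d_def using w contr_l2[OF Ac contr_l2[OF T w]] by simp
      have "l2inner ((?A^^n) d) h = 0"
      proof (rule coeff_zero[where M = "l2norm d * l2norm h"])
        show "cmod (l2inner ((?A^^n) d) h) \<le> l2norm d * l2norm h" for n
        proof -
          have "cmod (l2inner ((?A^^n) d) h) \<le> l2norm ((?A^^n) d) * l2norm h"
            by (rule cauchy_schwarz[OF contr_l2[OF contr_pow[OF Ac] dl] hl])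
          also have "\<dots> \<le> l2norm d * l2norm h"
            by (rule mult_right_mono[OF contr_norm[OF contr_pow[OF Ac] dl]]) (use hl in simp)
          finally show ?thesis .
        qed
        fix t :: real assume t: "0 < t" "t < 1"
        obtain x where x: "x \<in> l2" and xe: "x = d + sc (complex_of_real t) (?A x)"
          and xs: "\<forall>h\<in>l2. (\<lambda>n. complex_of_real (t^n) * l2inner ((?A^^n) d) h) sums l2inner x h"
          using geo[OF Ac dl, of t] t by auto
        have mem: "(x, sc (complex_of_real t) x) \<in> Nplus T (complex_of_real t)"
          by (rule Nplus_elem[OF T w x]) (use xe in \<open>simp add: d_def\<close>)
        have "(x, sc (complex_of_real t) x) \<in> NN T" by (rule NN_plus[OF mem]) (use t in simp)
        then have s1: "sc (complex_of_real t) x \<in> ?S" by (rule inS) simp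
        have "sc (complex_of_real (1/t)) (sc (complex_of_real t) x) + sc 0 (sc (complex_of_real t) x) \<in> ?S"
          by (rule lin[OF s1 s1])
        moreover have "sc (complex_of_real (1/t)) (sc (complex_of_real t) x) + sc 0 (sc (complex_of_real t) x) = x"
          using t by (auto simp: sc_def)
        ultimately have "x \<in> ?S" by simp
        then have "l2inner x h = 0" using ho by blast
        then show "(\<lambda>n. complex_of_real (t^n) * l2inner ((?A^^n) d) h) sums 0" using xs hl by metis
      qed
      then show ?thesis by (simp add: d_def)
    qed
    define u where "u = (T^^n) h"
    have ul: "u \<in> l2" unfolding u_def by (rule contr_l2[OF contr_pow[OF T] hl])
    have "u - ?A (T u) = 0"
    proof (rule kill)
      show "u - ?A (T u) \<in> l2" using ul contr_l2[OF Ac contr_l2[OF T ul]] by simp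
      fix w assume w: "w \<in> l2"
      have dl: "w - ?A (T w) \<in> l2" using w contr_l2[OF Ac contr_l2[OF T w]] by simp
      have "l2inner w (u - ?A (T u)) = l2inner (w - ?A (T w)) u" by (rule selfadj1[OF T w ul, symmetric])
      also have "\<dots> = l2inner ((?A^^n) (w - ?A (T w))) h"
        unfolding u_def by (rule pow_adj_gen[OF Ac T adj_inner2[OF T] dl hl, symmetric])
      also have "\<dots> = 0" by (rule coef[OF w])
      finally show "l2inner w (u - ?A (T u)) = 0" .
    qed
    then show ?thesis by (simp add: u_def)
  qed
  have hK2: "T (?A ((?A^^n) h)) = (?A^^n) h" for n
  proof -
    have coef: "l2inner ((T^^n) (w - T (?A w))) h = 0" if w: "w \<in> l2" for w
    proof -
      define d where "d = w - T (?A w)"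
      have dl: "d \<in> l2" unfolding d_def using w contr_l2[OF T contr_l2[OF Ac w]] by simp
      have "l2inner ((T^^n) d) h = 0"
      proof (rule coeff_zero[where M = "l2norm d * l2norm h"])
        show "cmod (l2inner ((T^^n) d) h) \<le> l2norm d * l2norm h" for n
        proof -
          have "cmod (l2inner ((T^^n) d) h) \<le> l2norm ((T^^n) d) * l2norm h"
            by (rule cauchy_schwarz[OF contr_l2[OF contr_pow[OF T] dl] hl])
          also have "\<dots> \<le> l2norm d * l2norm h"
            by (rule mult_right_mono[OF contr_norm[OF contr_pow[OF T] dl]]) (use hl in simp)
          finally show ?thesis .
        qed
        fix t :: real assume t: "0 < t" "t < 1"
        obtain z where z: "z \<in> l2" and ze: "z = d + sc (complex_of_real t) (T z)"
          and zs: "\<forall>h\<in>l2. (\<lambda>n. complex_of_real (t^n) * l2inner ((T^^n) d) h) sums l2inner z h"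
          using geo[OF T dl, of t] t by auto
        have mem: "(sc (complex_of_real t) z, z) \<in> Nminus T (complex_of_real t)"
          by (rule Nminus_elem[OF T w z]) (use ze in \<open>simp add: d_def\<close>)
        have "(sc (complex_of_real t) z, z) \<in> NN T" by (rule NN_minus[OF mem]) (use t in simp)
        then have "z \<in> ?S" by (rule inS) simp
        then have "l2inner z h = 0" using ho by blast
        then show "(\<lambda>n. complex_of_real (t^n) * l2inner ((T^^n) d) h) sums 0" using zs hl by metis
      qed
      then show ?thesis by (simp add: d_def)
    qed
    define u where "u = (?A^^n) h"
    have ul: "u \<in> l2" unfolding u_def by (rule contr_l2[OF contr_pow[OF Ac] hl])
    have "u - T (?A u) = 0"
    proof (rule kill)
      show "u - T (?A u) \<in> l2" using ul contr_l2[OF T contr_l2[OF Ac ul]] by simp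
      fix w assume w: "w \<in> l2"
      have dl: "w - T (?A w) \<in> l2" using w contr_l2[OF T contr_l2[OF Ac w]] by simp
      have "l2inner w (u - T (?A u)) = l2inner (w - T (?A w)) u" by (rule selfadj2[OF T w ul, symmetric])
      also have "\<dots> = l2inner ((T^^n) (w - T (?A w))) h"
        unfolding u_def by (rule pow_adj_gen[OF T Ac adj_inner[OF T] dl hl, symmetric])
      also have "\<dots> = 0" by (rule coef[OF w])
      finally show "l2inner w (u - T (?A u)) = 0" .
    qed
    then show ?thesis by (simp add: u_def)
  qed
  have "h = 0" by (rule unitary_zero[OF T c hl hK hK2])
  with hnz show False by simp
qed


theorem corollary4p11:
  fixes T :: "(nat \<Rightarrow> complex) \<Rightarrow> (nat \<Rightarrow> complex)"
  assumes "is_contraction T" and "cnu T"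
  shows "NN T \<subseteq> sorth (AT T) \<and>
         (\<forall>a\<in>sorth (AT T). \<forall>e>0. \<exists>b\<in>NN T. knorm (kdiff a b) < e)"
proof
  have T: "is_contraction T" and c: "cnu T" using assms by auto
  let ?A = "Defs.adjoint T"
  have Ac: "is_contraction ?A" by (rule adj_contr[OF T])
  show "NN T \<subseteq> sorth (AT T)" by (rule NN_sorth[OF T])
  have eqk: "l2inner (fst p) k = l2inner (snd p) (T k)" if p: "p \<in> sorth (AT T)" and k: "k \<in> KK T" for p k
  proof -
    have "(k, T k) \<in> AT T" using k by (auto simp: AT_def)
    then have "kform p (k, T k) = 0" using p by (auto simp: sorth_def)
    then have "\<i> * (l2inner (fst p) k - l2inner (snd p) (T k)) = 0" by (simp add: kform_def right_diff_distrib)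
    then show ?thesis by simp
  qed
  show "\<forall>a\<in>sorth (AT T). \<forall>e>0. \<exists>b\<in>NN T. knorm (kdiff a b) < e"
  proof (intro ballI allI impI)
    fix a and e :: real assume a: "a \<in> sorth (AT T)" and e: "e > 0"
    obtain y1 y2 where ay: "a = (y1, y2)" by (cases a)
    have y1: "y1 \<in> l2" and y2: "y2 \<in> l2" using a ay by (auto simp: sorth_def kspace_def)
    obtain b0 where b0: "b0 \<in> NN T" and b0n: "l2norm (y2 - snd b0) < e/2"
      using snd_NN_dense[OF T c y2, of "e/2"] e by auto
    obtain p s where ps: "b0 = (p, s)" by (cases b0)
    have b0s: "b0 \<in> sorth (AT T)" using NN_sorth[OF T] b0 by blast
    have pl: "p \<in> l2" and sl: "s \<in> l2" using b0s ps by (auto simp: sorth_def kspace_def)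
    define u where "u = y2 - s"
    have ul: "u \<in> l2" using y2 sl by (simp add: u_def)
    have Aul: "?A u \<in> l2" by (rule contr_l2[OF Ac ul])
    define d0 where "d0 = (y1 - p) - ?A u"
    have d0l: "d0 \<in> l2" using y1 pl Aul by (simp add: d0_def)
    have d0N: "(d0, sc 0 d0) \<in> Nplus T 0"
    proof -
      have "kform (d0, sc 0 d0) b = 0" if b: "b \<in> AT T" for b
      proof -
        obtain k where k: "k \<in> KK T" and bk: "b = (k, T k)" using b by (auto simp: AT_def)
        have kl: "k \<in> l2" using k by (auto simp: KK_def)
        have Tkl: "T k \<in> l2" by (rule contr_l2[OF T kl])
        have e1: "l2inner y1 k = l2inner y2 (T k)" using eqk[OF a k] ay by simp
        have e2: "l2inner p k = l2inner s (T k)" using eqk[OF b0s k] ps by simp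
        have e3: "l2inner (?A u) k = l2inner u (T k)" by (rule adj_inner2[OF T ul kl])
        have "l2inner d0 k = l2inner y1 k - l2inner p k - l2inner (?A u) k"
          unfolding d0_def using y1 pl Aul kl by (simp add: li_diff_left)
        also have "\<dots> = l2inner y2 (T k) - l2inner s (T k) - l2inner u (T k)" using e1 e2 e3 by simp
        also have "\<dots> = 0" unfolding u_def using y2 sl Tkl by (simp add: li_diff_left)
        finally have "l2inner d0 k = 0" .
        then show ?thesis unfolding bk kform_def using d0l Tkl by (simp add: li_sc_left)
      qed
      then show ?thesis unfolding Nplus_def sorth_def kspace_def using d0l by auto
    qed
    have d0NN: "(d0, sc 0 d0) \<in> NN T" by (rule NN_plus[OF d0N]) simp
    define b where "b = ((\<lambda>n. 1 * fst b0 n + 1 * fst (d0, sc 0 d0) n), (\<lambda>n. 1 * snd b0 n + 1 * snd (d0, sc 0 d0) n))"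
    have bN: "b \<in> NN T" unfolding b_def using b0 d0NN unfolding NN_def by (rule kspan_lc)
    have kd: "kdiff a b = (?A u, u)"
      unfolding kdiff_def ay b_def ps d0_def u_def by (auto simp: sc_def)
    have "knorm (kdiff a b) = sqrt ((l2norm (?A u))^2 + (l2norm u)^2)"
      unfolding kd knorm_def by simp
    also have "\<dots> \<le> l2norm (?A u) + l2norm u"
      by (rule sqrt_sum_squares_le_sum) (use Aul ul in simp_all)
    also have "\<dots> \<le> 2 * l2norm u" using contr_norm[OF Ac ul] by simp
    also have "\<dots> < e" using b0n ps by (simp add: u_def)
    finally show "\<exists>b\<in>NN T. knorm (kdiff a b) < e" using bN by blast
  qed
qed


end
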